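(* Let $T=(T,\mu,\iota)$ be a normal lax double monad on an equipment $\mathcal K$. For every vertical morphism $f\colon A\to C$ in $\mathcal K$, the cell $\iota_{f_*}$ (where $f_*\colon A\nrightarrow C$ is the companion of $f$) satisfies the right Beck–Chevalley condition.
   Context: Double categories: a double category has objects, vertical morphisms (composition $\circ$), horizontal morphisms $J\colon A\nrightarrow B$ (composition $\odot$ in diagrammatic order, units $1_A$, weakly associative/unital) and cells with horizontal source $J\colon A\nrightarrow B$, horizontal target $K\colon C\nrightarrow D$, vertical sides $f\colon A\to C$, $g\colon B\to D$; horizontal cells are those with identity vertical sides. A cell $\phi\colon J\Rightarrow K$ with sides $f,g$ is cartesian if every cell $H\Rightarrow K$ with sides $f\circ h,g\circ k$ factors uniquely through $\phi$ via a cell $H\Rightarrow J$ with sides $h,k$; opcartesian dually. The companion $f_*\colon A\nrightarrow C$ of $f\colon A\to C$ is the restriction of $1_C$ along $f,\mathrm{id}_C$, given by a cartesian cell $f_*\Rightarrow 1_C$ with sides $f,\mathrm{id}_C$, equivalently by an opcartesian cell $1_A\Rightarrow f_*$ with sides $\mathrm{id}_A,f$. An equipment is a double category with all companions and conjoints. A normal lax double monad $(T,\mu,\iota)$ on $\mathcal K$: a lax double functor $T\colon\mathcal K\to\mathcal K$ preserving vertical composition, identities and horizontal units strictly and horizontal composition up to coherent compositor cells $TJ\odot TH\Rightarrow T(J\odot H)$, with double transformations $\mu\colon T^2\Rightarrow T$, $\iota\colon\mathrm{id}\Rightarrow T$ satisfying the monad axioms; $\iota$ consists of vertical morphisms $\iota_A\colon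 A\to TA$ and cells $\iota_J\colon J\Rightarrow TJ$ with vertical sides $\iota_A,\iota_B$, natural, compatible with compositors, with $\iota_{1_A}=1_{\iota_A}$. Right Beck–Chevalley condition: for $J\colon A\nrightarrow B$ let $\iota_{J*}\colon J\odot\iota_{B*}\Rightarrow\iota_{A*}\odot TJ$ be the horizontal cell obtained as the horizontal composite of the opcartesian cell $1_A\Rightarrow\iota_{A*}$ (sides $\mathrm{id}_A,\iota_A$), the cell $\iota_J$, and the cartesian cell $\iota_{B*}\Rightarrow 1_{TB}$ (sides $\iota_B,\mathrm{id}_{TB}$). We say $\iota_J$ satisfies the right Beck–Chevalley condition if $\iota_{J*}$ is invertible. *)

theory Defs
  imports Main
begin

section \<open>Pseudo double categories (weak horizontal, strict vertical composition)\<close>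

text \<open>Objects 'o, vertical morphisms 'v, horizontal morphisms 'h, cells 'c, each
relativised to a carrier set.  Vertical composition is written applicatively
(vcmp g f = g o f); horizontal composition is diagrammatic (hcmp J H = J (.) H for
J : A -|-> B, H : B -|-> C).  A cell phi has horizontal source src phi, horizontal
target tgt phi and vertical sides lft phi, rgt phi.  cv psi phi is vertical composition
of cells (phi on top), ch phi psi horizontal composition (diagrammatic), cid J the identity
cell on J, cun f the horizontal unit cell 1_f : 1_A => 1_C on f : A -> C; asc, lu, ru are
the associator (J.H).K => J.(H.K) and unitors 1_A.J => J, J.1_B => J.\<close>

record ('o,'v,'h,'c) dblcat =
  Ob :: "'o set"
  Ver :: "'v set"
  Hor :: "'h set"
  Cel :: "'c set"
  vdom :: "'v \<Rightarrow> 'o"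
  vcod :: "'v \<Rightarrow> 'o"
  vcmp :: "'v \<Rightarrow> 'v \<Rightarrow> 'v"
  vid :: "'o \<Rightarrow> 'v"
  hdom :: "'h \<Rightarrow> 'o"
  hcod :: "'h \<Rightarrow> 'o"
  hcmp :: "'h \<Rightarrow> 'h \<Rightarrow> 'h"
  hun :: "'o \<Rightarrow> 'h"
  src :: "'c \<Rightarrow> 'h"
  tgt :: "'c \<Rightarrow> 'h"
  lft :: "'c \<Rightarrow> 'v"
  rgt :: "'c \<Rightarrow> 'v"
  cv :: "'c \<Rightarrow> 'c \<Rightarrow> 'c"
  cid :: "'h \<Rightarrow> 'c"
  ch :: "'c \<Rightarrow> 'c \<Rightarrow> 'c"
  cun :: "'v \<Rightarrow> 'c"
  asc :: "'h \<Rightarrow> 'h \<Rightarrow> 'h \<Rightarrow> 'c"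
  lu :: "'h \<Rightarrow> 'c"
  ru :: "'h \<Rightarrow> 'c"

definition iso_cell :: "('o,'v,'h,'c,'z) dblcat_scheme \<Rightarrow> 'c \<Rightarrow> bool" where
  "iso_cell D \<phi> \<longleftrightarrow> \<phi> \<in> Cel D \<and>
     (\<exists>\<psi> \<in> Cel D. tgt D \<phi> = src D \<psi> \<and> tgt D \<psi> = src D \<phi> \<and>
        cv D \<psi> \<phi> = cid D (src D \<phi>) \<and> cv D \<phi> \<psi> = cid D (tgt D \<phi>))"

definition cinv :: "('o,'v,'h,'c,'z) dblcat_scheme \<Rightarrow> 'c \<Rightarrow> 'c" where
  "cinv D \<phi> = (THE \<psi>. \<psi> \<in> Cel D \<and> tgt D \<phi> = src D \<psi> \<and> tgt D \<psi> = src D \<phi> \<and>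
        cv D \<psi> \<phi> = cid D (src D \<phi>) \<and> cv D \<phi> \<psi> = cid D (tgt D \<phi>))"

definition globular :: "('o,'v,'h,'c,'z) dblcat_scheme \<Rightarrow> 'c \<Rightarrow> 'h \<Rightarrow> 'h \<Rightarrow> bool" where
  "globular D \<phi> J K \<longleftrightarrow> \<phi> \<in> Cel D \<and> src D \<phi> = J \<and> tgt D \<phi> = K \<and>
     lft D \<phi> = vid D (hdom D J) \<and> rgt D \<phi> = vid D (hcod D J)"

definition vseq :: "('o,'v,'h,'c,'z) dblcat_scheme \<Rightarrow> 'v \<Rightarrow> 'v \<Rightarrow> bool" where
  "vseq D g f \<longleftrightarrow> f \<in> Ver D \<and> g \<in> Ver D \<and> vcod D f = vdom D g"

definition hseq :: "('o,'v,'h,'c,'z) dblcat_scheme \<Rightarrow> 'h \<Rightarrow> 'h \<Rightarrow> bool" where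
  "hseq D J H \<longleftrightarrow> J \<in> Hor D \<and> H \<in> Hor D \<and> hcod D J = hdom D H"

definition cvseq :: "('o,'v,'h,'c,'z) dblcat_scheme \<Rightarrow> 'c \<Rightarrow> 'c \<Rightarrow> bool" where
  "cvseq D \<psi> \<phi> \<longleftrightarrow> \<phi> \<in> Cel D \<and> \<psi> \<in> Cel D \<and> tgt D \<phi> = src D \<psi>"

definition chseq :: "('o,'v,'h,'c,'z) dblcat_scheme \<Rightarrow> 'c \<Rightarrow> 'c \<Rightarrow> bool" where
  "chseq D \<phi> \<psi> \<longleftrightarrow> \<phi> \<in> Cel D \<and> \<psi> \<in> Cel D \<and> hcod D (src D \<phi>) = hdom D (src D \<psi>)
      \<and> rgt D \<phi> = lft D \<psi>"

definition double_category :: "('o,'v,'h,'c,'z) dblcat_scheme \<Rightarrow> bool" where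
  "double_category D \<longleftrightarrow>
   \<comment> \<open>vertical category\<close>
   (\<forall>f \<in> Ver D. vdom D f \<in> Ob D \<and> vcod D f \<in> Ob D) \<and>
   (\<forall>A \<in> Ob D. vid D A \<in> Ver D \<and> vdom D (vid D A) = A \<and> vcod D (vid D A) = A) \<and>
   (\<forall>f g. vseq D g f \<longrightarrow> vcmp D g f \<in> Ver D \<and> vdom D (vcmp D g f) = vdom D f
        \<and> vcod D (vcmp D g f) = vcod D g) \<and>
   (\<forall>f \<in> Ver D. vcmp D f (vid D (vdom D f)) = f \<and> vcmp D (vid D (vcod D f)) f = f) \<and>
   (\<forall>f g h. vseq D g f \<and> vseq D h g \<longrightarrow> vcmp D h (vcmp D g f) = vcmp D (vcmp D h g) f) \<and>
   \<comment> \<open>horizontal morphisms\<close>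
   (\<forall>J \<in> Hor D. hdom D J \<in> Ob D \<and> hcod D J \<in> Ob D) \<and>
   (\<forall>A \<in> Ob D. hun D A \<in> Hor D \<and> hdom D (hun D A) = A \<and> hcod D (hun D A) = A) \<and>
   (\<forall>J H. hseq D J H \<longrightarrow> hcmp D J H \<in> Hor D \<and> hdom D (hcmp D J H) = hdom D J
        \<and> hcod D (hcmp D J H) = hcod D H) \<and>
   \<comment> \<open>cells and their boundaries\<close>
   (\<forall>\<phi> \<in> Cel D. src D \<phi> \<in> Hor D \<and> tgt D \<phi> \<in> Hor D \<and> lft D \<phi> \<in> Ver D \<and> rgt D \<phi> \<in> Ver D
        \<and> vdom D (lft D \<phi>) = hdom D (src D \<phi>) \<and> vcod D (lft D \<phi>) = hdom D (tgt D \<phi>)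
        \<and> vdom D (rgt D \<phi>) = hcod D (src D \<phi>) \<and> vcod D (rgt D \<phi>) = hcod D (tgt D \<phi>)) \<and>
   \<comment> \<open>vertical composition of cells: a category\<close>
   (\<forall>J \<in> Hor D. cid D J \<in> Cel D \<and> src D (cid D J) = J \<and> tgt D (cid D J) = J
        \<and> lft D (cid D J) = vid D (hdom D J) \<and> rgt D (cid D J) = vid D (hcod D J)) \<and>
   (\<forall>\<phi> \<psi>. cvseq D \<psi> \<phi> \<longrightarrow> cv D \<psi> \<phi> \<in> Cel D \<and> src D (cv D \<psi> \<phi>) = src D \<phi>
        \<and> tgt D (cv D \<psi> \<phi>) = tgt D \<psi> \<and> lft D (cv D \<psi> \<phi>) = vcmp D (lft D \<psi>) (lft D \<phi>)
        \<and> rgt D (cv D \<psi> \<phi>) = vcmp D (rgt D \<psi>) (rgt D \<phi>)) \<and>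
   (\<forall>\<phi> \<in> Cel D. cv D \<phi> (cid D (src D \<phi>)) = \<phi> \<and> cv D (cid D (tgt D \<phi>)) \<phi> = \<phi>) \<and>
   (\<forall>\<phi> \<psi> \<chi>. cvseq D \<psi> \<phi> \<and> cvseq D \<chi> \<psi> \<longrightarrow> cv D \<chi> (cv D \<psi> \<phi>) = cv D (cv D \<chi> \<psi>) \<phi>) \<and>
   \<comment> \<open>horizontal unit cells\<close>
   (\<forall>f \<in> Ver D. cun D f \<in> Cel D \<and> src D (cun D f) = hun D (vdom D f)
        \<and> tgt D (cun D f) = hun D (vcod D f) \<and> lft D (cun D f) = f \<and> rgt D (cun D f) = f) \<and>
   (\<forall>A \<in> Ob D. cun D (vid D A) = cid D (hun D A)) \<and>
   (\<forall>f g. vseq D g f \<longrightarrow> cun D (vcmp D g f) = cv D (cun D g) (cun D f)) \<and>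
   \<comment> \<open>horizontal composition of cells: functorial\<close>
   (\<forall>\<phi> \<psi>. chseq D \<phi> \<psi> \<longrightarrow> ch D \<phi> \<psi> \<in> Cel D
        \<and> src D (ch D \<phi> \<psi>) = hcmp D (src D \<phi>) (src D \<psi>)
        \<and> tgt D (ch D \<phi> \<psi>) = hcmp D (tgt D \<phi>) (tgt D \<psi>)
        \<and> lft D (ch D \<phi> \<psi>) = lft D \<phi> \<and> rgt D (ch D \<phi> \<psi>) = rgt D \<psi>) \<and>
   (\<forall>J H. hseq D J H \<longrightarrow> ch D (cid D J) (cid D H) = cid D (hcmp D J H)) \<and>
   (\<forall>\<phi> \<phi>' \<psi> \<psi>'. cvseq D \<psi> \<phi> \<and> cvseq D \<psi>' \<phi>' \<and> chseq D \<phi> \<phi>' \<and> chseq D \<psi> \<psi>' \<longrightarrow>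
        ch D (cv D \<psi> \<phi>) (cv D \<psi>' \<phi>') = cv D (ch D \<psi> \<psi>') (ch D \<phi> \<phi>')) \<and>
   \<comment> \<open>associator and unitors: invertible globular cells\<close>
   (\<forall>J H K. hseq D J H \<and> hseq D H K \<longrightarrow>
        globular D (asc D J H K) (hcmp D (hcmp D J H) K) (hcmp D J (hcmp D H K))
        \<and> iso_cell D (asc D J H K)) \<and>
   (\<forall>J \<in> Hor D. globular D (lu D J) (hcmp D (hun D (hdom D J)) J) J \<and> iso_cell D (lu D J)) \<and>
   (\<forall>J \<in> Hor D. globular D (ru D J) (hcmp D J (hun D (hcod D J))) J \<and> iso_cell D (ru D J)) \<and>
   \<comment> \<open>naturality of associator and unitors\<close>
   (\<forall>\<phi> \<psi> \<chi>. chseq D \<phi> \<psi> \<and> chseq D \<psi> \<chi> \<longrightarrow>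
        cv D (asc D (tgt D \<phi>) (tgt D \<psi>) (tgt D \<chi>)) (ch D (ch D \<phi> \<psi>) \<chi>)
        = cv D (ch D \<phi> (ch D \<psi> \<chi>)) (asc D (src D \<phi>) (src D \<psi>) (src D \<chi>))) \<and>
   (\<forall>\<phi> \<in> Cel D. cv D \<phi> (lu D (src D \<phi>)) = cv D (lu D (tgt D \<phi>)) (ch D (cun D (lft D \<phi>)) \<phi>)) \<and>
   (\<forall>\<phi> \<in> Cel D. cv D \<phi> (ru D (src D \<phi>)) = cv D (ru D (tgt D \<phi>)) (ch D \<phi> (cun D (rgt D \<phi>)))) \<and>
   \<comment> \<open>pentagon and triangle\<close>
   (\<forall>J H K L. hseq D J H \<and> hseq D H K \<and> hseq D K L \<longrightarrow>
        cv D (asc D J H (hcmp D K L)) (asc D (hcmp D J H) K L)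
        = cv D (ch D (cid D J) (asc D H K L))
            (cv D (asc D J (hcmp D H K) L) (ch D (asc D J H K) (cid D L)))) \<and>
   (\<forall>J H. hseq D J H \<longrightarrow>
        cv D (ch D (cid D J) (lu D H)) (asc D J (hun D (hcod D J)) H) = ch D (ru D J) (cid D H))"

definition cartesian :: "('o,'v,'h,'c,'z) dblcat_scheme \<Rightarrow> 'c \<Rightarrow> bool" where
  "cartesian D \<phi> \<longleftrightarrow> \<phi> \<in> Cel D \<and>
    (\<forall>\<chi> h k. \<chi> \<in> Cel D \<and> vseq D (lft D \<phi>) h \<and> vseq D (rgt D \<phi>) k \<and>
        tgt D \<chi> = tgt D \<phi> \<and> lft D \<chi> = vcmp D (lft D \<phi>) h \<and> rgt D \<chi> = vcmp D (rgt D \<phi>) k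
      \<longrightarrow> (\<exists>!\<theta>. \<theta> \<in> Cel D \<and> src D \<theta> = src D \<chi> \<and> tgt D \<theta> = src D \<phi> \<and>
             lft D \<theta> = h \<and> rgt D \<theta> = k \<and> cv D \<phi> \<theta> = \<chi>))"

text \<open>p is a cartesian cell f_* => 1_C with sides f, id_C, exhibiting its horizontal source
src p as the companion f_* of f : A -> C.\<close>
definition companion_cell :: "('o,'v,'h,'c,'z) dblcat_scheme \<Rightarrow> 'v \<Rightarrow> 'c \<Rightarrow> bool" where
  "companion_cell D f p \<longleftrightarrow> f \<in> Ver D \<and> cartesian D p \<and>
     tgt D p = hun D (vcod D f) \<and> lft D p = f \<and> rgt D p = vid D (vcod D f)"

text \<open>p is a cartesian cell f^* => 1_C with sides id_C, f (the conjoint f^* : C -|-> A).\<close>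
definition conjoint_cell :: "('o,'v,'h,'c,'z) dblcat_scheme \<Rightarrow> 'v \<Rightarrow> 'c \<Rightarrow> bool" where
  "conjoint_cell D f p \<longleftrightarrow> f \<in> Ver D \<and> cartesian D p \<and>
     tgt D p = hun D (vcod D f) \<and> lft D p = vid D (vcod D f) \<and> rgt D p = f"

text \<open>The opcartesian cell 1_A => f_* (sides id_A, f) corresponding to the cartesian cell p:
the unique factorisation of the unit cell 1_f through p.\<close>
definition companion_unit :: "('o,'v,'h,'c,'z) dblcat_scheme \<Rightarrow> 'v \<Rightarrow> 'c \<Rightarrow> 'c" where
  "companion_unit D f p = (THE q. q \<in> Cel D \<and> src D q = hun D (vdom D f) \<and> tgt D q = src D p
      \<and> lft D q = vid D (vdom D f) \<and> rgt D q = f \<and> cv D p q = cun D f)"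

definition equipment :: "('o,'v,'h,'c,'z) dblcat_scheme \<Rightarrow> bool" where
  "equipment D \<longleftrightarrow> double_category D \<and>
     (\<forall>f \<in> Ver D. (\<exists>p. companion_cell D f p) \<and> (\<exists>p. conjoint_cell D f p))"

text \<open>A lax double (endo)functor: action on objects, vertical and horizontal morphisms
and cells, and compositors fcmp J H : FJ . FH => F(J . H).\<close>
record ('o,'v,'h,'c) ldf =
  fo :: "'o \<Rightarrow> 'o"
  fv :: "'v \<Rightarrow> 'v"
  fh :: "'h \<Rightarrow> 'h"
  fc :: "'c \<Rightarrow> 'c"
  fcmp :: "'h \<Rightarrow> 'h \<Rightarrow> 'c"

definition normal_lax_double_functor ::
  "('o,'v,'h,'c,'z) dblcat_scheme \<Rightarrow> ('o,'v,'h,'c,'y) ldf_scheme \<Rightarrow> bool" where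
  "normal_lax_double_functor D F \<longleftrightarrow>
   (\<forall>A \<in> Ob D. fo F A \<in> Ob D) \<and>
   (\<forall>f \<in> Ver D. fv F f \<in> Ver D \<and> vdom D (fv F f) = fo F (vdom D f) \<and> vcod D (fv F f) = fo F (vcod D f)) \<and>
   (\<forall>J \<in> Hor D. fh F J \<in> Hor D \<and> hdom D (fh F J) = fo F (hdom D J) \<and> hcod D (fh F J) = fo F (hcod D J)) \<and>
   (\<forall>\<phi> \<in> Cel D. fc F \<phi> \<in> Cel D \<and> src D (fc F \<phi>) = fh F (src D \<phi>) \<and> tgt D (fc F \<phi>) = fh F (tgt D \<phi>)
        \<and> lft D (fc F \<phi>) = fv F (lft D \<phi>) \<and> rgt D (fc F \<phi>) = fv F (rgt D \<phi>)) \<and>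
   \<comment> \<open>strict preservation of vertical structure\<close>
   (\<forall>A \<in> Ob D. fv F (vid D A) = vid D (fo F A)) \<and>
   (\<forall>f g. vseq D g f \<longrightarrow> fv F (vcmp D g f) = vcmp D (fv F g) (fv F f)) \<and>
   (\<forall>J \<in> Hor D. fc F (cid D J) = cid D (fh F J)) \<and>
   (\<forall>\<phi> \<psi>. cvseq D \<psi> \<phi> \<longrightarrow> fc F (cv D \<psi> \<phi>) = cv D (fc F \<psi>) (fc F \<phi>)) \<and>
   \<comment> \<open>strict preservation of horizontal units (normality)\<close>
   (\<forall>A \<in> Ob D. fh F (hun D A) = hun D (fo F A)) \<and>
   (\<forall>f \<in> Ver D. fc F (cun D f) = cun D (fv F f)) \<and>
   \<comment> \<open>compositors\<close>
   (\<forall>J H. hseq D J H \<longrightarrow> globular D (fcmp F J H) (hcmp D (fh F J) (fh F H)) (fh F (hcmp D J H))) \<and>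
   (\<forall>\<phi> \<psi>. chseq D \<phi> \<psi> \<longrightarrow>
        cv D (fc F (ch D \<phi> \<psi>)) (fcmp F (src D \<phi>) (src D \<psi>))
        = cv D (fcmp F (tgt D \<phi>) (tgt D \<psi>)) (ch D (fc F \<phi>) (fc F \<psi>))) \<and>
   (\<forall>J H K. hseq D J H \<and> hseq D H K \<longrightarrow>
        cv D (fc F (asc D J H K)) (cv D (fcmp F (hcmp D J H) K) (ch D (fcmp F J H) (cid D (fh F K))))
        = cv D (fcmp F J (hcmp D H K))
            (cv D (ch D (cid D (fh F J)) (fcmp F H K)) (asc D (fh F J) (fh F H) (fh F K)))) \<and>
   (\<forall>J \<in> Hor D. cv D (fc F (lu D J)) (fcmp F (hun D (hdom D J)) J) = lu D (fh F J)) \<and>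
   (\<forall>J \<in> Hor D. cv D (fc F (ru D J)) (fcmp F J (hun D (hcod D J))) = ru D (fh F J))"

definition id_ldf :: "('o,'v,'h,'c,'z) dblcat_scheme \<Rightarrow> ('o,'v,'h,'c) ldf" where
  "id_ldf D = \<lparr> fo = (\<lambda>A. A), fv = (\<lambda>f. f), fh = (\<lambda>J. J), fc = (\<lambda>\<phi>. \<phi>),
               fcmp = (\<lambda>J H. cid D (hcmp D J H)) \<rparr>"

definition comp_ldf :: "('o,'v,'h,'c,'z) dblcat_scheme \<Rightarrow> ('o,'v,'h,'c,'y) ldf_scheme
    \<Rightarrow> ('o,'v,'h,'c,'x) ldf_scheme \<Rightarrow> ('o,'v,'h,'c) ldf" where
  "comp_ldf D G F = \<lparr> fo = fo G \<circ> fo F, fv = fv G \<circ> fv F, fh = fh G \<circ> fh F, fc = fc G \<circ> fc F,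
       fcmp = (\<lambda>J H. cv D (fc G (fcmp F J H)) (fcmp G (fh F J) (fh F H))) \<rparr>"

record ('v,'c,'o,'h) dtr =
  to :: "'o \<Rightarrow> 'v"
  th :: "'h \<Rightarrow> 'c"

definition double_transformation ::
  "('o,'v,'h,'c,'z) dblcat_scheme \<Rightarrow> ('o,'v,'h,'c,'y) ldf_scheme \<Rightarrow> ('o,'v,'h,'c,'x) ldf_scheme
     \<Rightarrow> ('v,'c,'o,'h,'w) dtr_scheme \<Rightarrow> bool" where
  "double_transformation D F G \<alpha> \<longleftrightarrow>
   (\<forall>A \<in> Ob D. to \<alpha> A \<in> Ver D \<and> vdom D (to \<alpha> A) = fo F A \<and> vcod D (to \<alpha> A) = fo G A) \<and>
   (\<forall>J \<in> Hor D. th \<alpha> J \<in> Cel D \<and> src D (th \<alpha> J) = fh F J \<and> tgt D (th \<alpha> J) = fh G J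
        \<and> lft D (th \<alpha> J) = to \<alpha> (hdom D J) \<and> rgt D (th \<alpha> J) = to \<alpha> (hcod D J)) \<and>
   (\<forall>f \<in> Ver D. vcmp D (to \<alpha> (vcod D f)) (fv F f) = vcmp D (fv G f) (to \<alpha> (vdom D f))) \<and>
   (\<forall>\<phi> \<in> Cel D. cv D (th \<alpha> (tgt D \<phi>)) (fc F \<phi>) = cv D (fc G \<phi>) (th \<alpha> (src D \<phi>))) \<and>
   (\<forall>J H. hseq D J H \<longrightarrow>
        cv D (th \<alpha> (hcmp D J H)) (fcmp F J H) = cv D (fcmp G J H) (ch D (th \<alpha> J) (th \<alpha> H))) \<and>
   (\<forall>A \<in> Ob D. th \<alpha> (hun D A) = cun D (to \<alpha> A))"

definition normal_lax_double_monad ::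
  "('o,'v,'h,'c,'z) dblcat_scheme \<Rightarrow> ('o,'v,'h,'c,'y) ldf_scheme
     \<Rightarrow> ('v,'c,'o,'h,'x) dtr_scheme \<Rightarrow> ('v,'c,'o,'h,'w) dtr_scheme \<Rightarrow> bool" where
  "normal_lax_double_monad D T \<mu> \<iota> \<longleftrightarrow>
   double_category D \<and> normal_lax_double_functor D T \<and>
   double_transformation D (comp_ldf D T T) T \<mu> \<and>
   double_transformation D (id_ldf D) T \<iota> \<and>
   (\<forall>A \<in> Ob D. vcmp D (to \<mu> A) (fv T (to \<mu> A)) = vcmp D (to \<mu> A) (to \<mu> (fo T A))
        \<and> vcmp D (to \<mu> A) (to \<iota> (fo T A)) = vid D (fo T A)
        \<and> vcmp D (to \<mu> A) (fv T (to \<iota> A)) = vid D (fo T A)) \<and>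
   (\<forall>J \<in> Hor D. cv D (th \<mu> J) (fc T (th \<mu> J)) = cv D (th \<mu> J) (th \<mu> (fh T J))
        \<and> cv D (th \<mu> J) (th \<iota> (fh T J)) = cid D (fh T J)
        \<and> cv D (th \<mu> J) (fc T (th \<iota> J)) = cid D (fh T J))"

text \<open>Given cartesian companion cells pA : iota_A* => 1_{TA} and pB : iota_B* => 1_{TB},
iota_J* : J . iota_B* => iota_A* . TJ is
  rho o ((opc_A . iota_J) . pB) o (lambda_J^{-1} . id).\<close>
definition iota_star ::
  "('o,'v,'h,'c,'z) dblcat_scheme \<Rightarrow> ('o,'v,'h,'c,'y) ldf_scheme \<Rightarrow> ('v,'c,'o,'h,'x) dtr_scheme
     \<Rightarrow> 'h \<Rightarrow> 'c \<Rightarrow> 'c \<Rightarrow> 'c" where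
  "iota_star D T \<iota> J pA pB =
     cv D (ru D (hcmp D (src D pA) (fh T J)))
       (cv D (ch D (ch D (companion_unit D (to \<iota> (hdom D J)) pA) (th \<iota> J)) pB)
             (ch D (cinv D (lu D J)) (cid D (src D pB))))"

definition right_BC ::
  "('o,'v,'h,'c,'z) dblcat_scheme \<Rightarrow> ('o,'v,'h,'c,'y) ldf_scheme \<Rightarrow> ('v,'c,'o,'h,'x) dtr_scheme
     \<Rightarrow> 'h \<Rightarrow> bool" where
  "right_BC D T \<iota> J \<longleftrightarrow>
     (\<forall>pA pB. companion_cell D (to \<iota> (hdom D J)) pA \<longrightarrow> companion_cell D (to \<iota> (hcod D J)) pB
        \<longrightarrow> iso_cell D (iota_star D T \<iota> J pA pB))"

end

theory Submission
  imports Defs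
begin


locale DC =
  fixes D :: "('o,'v,'h,'c) dblcat"
  assumes dc: "double_category D"
begin

lemmas ax = dc[unfolded double_category_def vseq_def hseq_def cvseq_def chseq_def]
lemmas a1 = ax[THEN conjunct1]
lemmas a2 = ax[THEN conjunct2, THEN conjunct1]
lemmas a3 = ax[THEN conjunct2, THEN conjunct2, THEN conjunct1]
lemmas a4 = ax[THEN conjunct2, THEN conjunct2, THEN conjunct2, THEN conjunct1]
lemmas a5 = ax[THEN conjunct2, THEN conjunct2, THEN conjunct2, THEN conjunct2, THEN conjunct1]
lemmas a6 = ax[THEN conjunct2, THEN conjunct2, THEN conjunct2, THEN conjunct2, THEN conjunct2, THEN conjunct1]
lemmas a7 = ax[THEN conjunct2, THEN conjunct2, THEN conjunct2, THEN conjunct2, THEN conjunct2, THEN conjunct2, THEN conjunct1]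
lemmas a8 = ax[THEN conjunct2, THEN conjunct2, THEN conjunct2, THEN conjunct2, THEN conjunct2, THEN conjunct2, THEN conjunct2, THEN conjunct1]
lemmas a9 = ax[THEN conjunct2, THEN conjunct2, THEN conjunct2, THEN conjunct2, THEN conjunct2, THEN conjunct2, THEN conjunct2, THEN conjunct2, THEN conjunct1]
lemmas a10 = ax[THEN conjunct2, THEN conjunct2, THEN conjunct2, THEN conjunct2, THEN conjunct2, THEN conjunct2, THEN conjunct2, THEN conjunct2, THEN conjunct2, THEN conjunct1]
lemmas a11 = ax[THEN conjunct2, THEN conjunct2, THEN conjunct2, THEN conjunct2, THEN conjunct2, THEN conjunct2, THEN conjunct2, THEN conjunct2, THEN conjunct2, THEN conjunct2, THEN conjunct1]
lemmas a12 = ax[THEN conjunct2, THEN conjunct2, THEN conjunct2, THEN conjunct2, THEN conjunct2, THEN conjunct2, THEN conjunct2, THEN conjunct2, THEN conjunct2, THEN conjunct2, THEN conjunct2, THEN conjunct1]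
lemmas a13 = ax[THEN conjunct2, THEN conjunct2, THEN conjunct2, THEN conjunct2, THEN conjunct2, THEN conjunct2, THEN conjunct2, THEN conjunct2, THEN conjunct2, THEN conjunct2, THEN conjunct2, THEN conjunct2, THEN conjunct1]
lemmas a14 = ax[THEN conjunct2, THEN conjunct2, THEN conjunct2, THEN conjunct2, THEN conjunct2, THEN conjunct2, THEN conjunct2, THEN conjunct2, THEN conjunct2, THEN conjunct2, THEN conjunct2, THEN conjunct2, THEN conjunct2, THEN conjunct1]
lemmas a15 = ax[THEN conjunct2, THEN conjunct2, THEN conjunct2, THEN conjunct2, THEN conjunct2, THEN conjunct2, THEN conjunct2, THEN conjunct2, THEN conjunct2, THEN conjunct2, THEN conjunct2, THEN conjunct2, THEN conjunct2, THEN conjunct2, THEN conjunct1]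
lemmas a16 = ax[THEN conjunct2, THEN conjunct2, THEN conjunct2, THEN conjunct2, THEN conjunct2, THEN conjunct2, THEN conjunct2, THEN conjunct2, THEN conjunct2, THEN conjunct2, THEN conjunct2, THEN conjunct2, THEN conjunct2, THEN conjunct2, THEN conjunct2, THEN conjunct1]
lemmas a17 = ax[THEN conjunct2, THEN conjunct2, THEN conjunct2, THEN conjunct2, THEN conjunct2, THEN conjunct2, THEN conjunct2, THEN conjunct2, THEN conjunct2, THEN conjunct2, THEN conjunct2, THEN conjunct2, THEN conjunct2, THEN conjunct2, THEN conjunct2, THEN conjunct2, THEN conjunct1]
lemmas a18 = ax[THEN conjunct2, THEN conjunct2, THEN conjunct2, THEN conjunct2, THEN conjunct2, THEN conjunct2, THEN conjunct2, THEN conjunct2, THEN conjunct2, THEN conjunct2, THEN conjunct2, THEN conjunct2, THEN conjunct2, THEN conjunct2, THEN conjunct2, THEN conjunct2, THEN conjunct2, THEN conjunct1]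
lemmas a19 = ax[THEN conjunct2, THEN conjunct2, THEN conjunct2, THEN conjunct2, THEN conjunct2, THEN conjunct2, THEN conjunct2, THEN conjunct2, THEN conjunct2, THEN conjunct2, THEN conjunct2, THEN conjunct2, THEN conjunct2, THEN conjunct2, THEN conjunct2, THEN conjunct2, THEN conjunct2, THEN conjunct2, THEN conjunct1]
lemmas a20 = ax[THEN conjunct2, THEN conjunct2, THEN conjunct2, THEN conjunct2, THEN conjunct2, THEN conjunct2, THEN conjunct2, THEN conjunct2, THEN conjunct2, THEN conjunct2, THEN conjunct2, THEN conjunct2, THEN conjunct2, THEN conjunct2, THEN conjunct2, THEN conjunct2, THEN conjunct2, THEN conjunct2, THEN conjunct2, THEN conjunct1]
lemmas a21 = ax[THEN conjunct2, THEN conjunct2, THEN conjunct2, THEN conjunct2, THEN conjunct2, THEN conjunct2, THEN conjunct2, THEN conjunct2, THEN conjunct2, THEN conjunct2, THEN conjunct2, THEN conjunct2, THEN conjunct2, THEN conjunct2, THEN conjunct2, THEN conjunct2, THEN conjunct2, THEN conjunct2, THEN conjunct2, THEN conjunct2, THEN conjunct1]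
lemmas a22 = ax[THEN conjunct2, THEN conjunct2, THEN conjunct2, THEN conjunct2, THEN conjunct2, THEN conjunct2, THEN conjunct2, THEN conjunct2, THEN conjunct2, THEN conjunct2, THEN conjunct2, THEN conjunct2, THEN conjunct2, THEN conjunct2, THEN conjunct2, THEN conjunct2, THEN conjunct2, THEN conjunct2, THEN conjunct2, THEN conjunct2, THEN conjunct2, THEN conjunct1]
lemmas a23 = ax[THEN conjunct2, THEN conjunct2, THEN conjunct2, THEN conjunct2, THEN conjunct2, THEN conjunct2, THEN conjunct2, THEN conjunct2, THEN conjunct2, THEN conjunct2, THEN conjunct2, THEN conjunct2, THEN conjunct2, THEN conjunct2, THEN conjunct2, THEN conjunct2, THEN conjunct2, THEN conjunct2, THEN conjunct2, THEN conjunct2, THEN conjunct2, THEN conjunct2, THEN conjunct1]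
lemmas a24 = ax[THEN conjunct2, THEN conjunct2, THEN conjunct2, THEN conjunct2, THEN conjunct2, THEN conjunct2, THEN conjunct2, THEN conjunct2, THEN conjunct2, THEN conjunct2, THEN conjunct2, THEN conjunct2, THEN conjunct2, THEN conjunct2, THEN conjunct2, THEN conjunct2, THEN conjunct2, THEN conjunct2, THEN conjunct2, THEN conjunct2, THEN conjunct2, THEN conjunct2, THEN conjunct2, THEN conjunct1]
lemmas a25 = ax[THEN conjunct2, THEN conjunct2, THEN conjunct2, THEN conjunct2, THEN conjunct2, THEN conjunct2, THEN conjunct2, THEN conjunct2, THEN conjunct2, THEN conjunct2, THEN conjunct2, THEN conjunct2, THEN conjunct2, THEN conjunct2, THEN conjunct2, THEN conjunct2, THEN conjunct2, THEN conjunct2, THEN conjunct2, THEN conjunct2, THEN conjunct2, THEN conjunct2, THEN conjunct2, THEN conjunct2, THEN conjunct1]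
lemmas a26 = ax[THEN conjunct2, THEN conjunct2, THEN conjunct2, THEN conjunct2, THEN conjunct2, THEN conjunct2, THEN conjunct2, THEN conjunct2, THEN conjunct2, THEN conjunct2, THEN conjunct2, THEN conjunct2, THEN conjunct2, THEN conjunct2, THEN conjunct2, THEN conjunct2, THEN conjunct2, THEN conjunct2, THEN conjunct2, THEN conjunct2, THEN conjunct2, THEN conjunct2, THEN conjunct2, THEN conjunct2, THEN conjunct2, THEN conjunct1]
lemmas a27 = ax[THEN conjunct2, THEN conjunct2, THEN conjunct2, THEN conjunct2, THEN conjunct2, THEN conjunct2, THEN conjunct2, THEN conjunct2, THEN conjunct2, THEN conjunct2, THEN conjunct2, THEN conjunct2, THEN conjunct2, THEN conjunct2, THEN conjunct2, THEN conjunct2, THEN conjunct2, THEN conjunct2, THEN conjunct2, THEN conjunct2, THEN conjunct2, THEN conjunct2, THEN conjunct2, THEN conjunct2, THEN conjunct2, THEN conjunct2]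

lemma vdom_Ob[simp]: "f \<in> Ver D \<Longrightarrow> vdom D f \<in> Ob D" using a1 by blast
lemma vcod_Ob[simp]: "f \<in> Ver D \<Longrightarrow> vcod D f \<in> Ob D" using a1 by blast
lemma vid_Ver[simp]: "A \<in> Ob D \<Longrightarrow> vid D A \<in> Ver D" using a2 by blast
lemma vid_dom[simp]: "A \<in> Ob D \<Longrightarrow> vdom D (vid D A) = A" using a2 by blast
lemma vid_cod[simp]: "A \<in> Ob D \<Longrightarrow> vcod D (vid D A) = A" using a2 by blast
lemma vcmp_Ver[simp]: "f \<in> Ver D \<Longrightarrow> g \<in> Ver D \<Longrightarrow> vcod D f = vdom D g \<Longrightarrow> vcmp D g f \<in> Ver D" using a3 by blast
lemma vcmp_dom[simp]: "f \<in> Ver D \<Longrightarrow> g \<in> Ver D \<Longrightarrow> vcod D f = vdom D g \<Longrightarrow> vdom D (vcmp D g f) = vdom D f" using a3 by blast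
lemma vcmp_cod[simp]: "f \<in> Ver D \<Longrightarrow> g \<in> Ver D \<Longrightarrow> vcod D f = vdom D g \<Longrightarrow> vcod D (vcmp D g f) = vcod D g" using a3 by blast
lemma vcmp_vid_r[simp]: "f \<in> Ver D \<Longrightarrow> vdom D f = A \<Longrightarrow> vcmp D f (vid D A) = f" using a4 by blast
lemma vcmp_vid_l[simp]: "f \<in> Ver D \<Longrightarrow> vcod D f = A \<Longrightarrow> vcmp D (vid D A) f = f" using a4 by blast
lemma vcmp_assoc: "f \<in> Ver D \<Longrightarrow> g \<in> Ver D \<Longrightarrow> h \<in> Ver D \<Longrightarrow> vcod D f = vdom D g \<Longrightarrow> vcod D g = vdom D h
   \<Longrightarrow> vcmp D h (vcmp D g f) = vcmp D (vcmp D h g) f" using a5 by metis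

lemma hdom_Ob[simp]: "J \<in> Hor D \<Longrightarrow> hdom D J \<in> Ob D" using a6 by blast
lemma hcod_Ob[simp]: "J \<in> Hor D \<Longrightarrow> hcod D J \<in> Ob D" using a6 by blast
lemma hun_Hor[simp]: "A \<in> Ob D \<Longrightarrow> hun D A \<in> Hor D" using a7 by blast
lemma hun_dom[simp]: "A \<in> Ob D \<Longrightarrow> hdom D (hun D A) = A" using a7 by blast
lemma hun_cod[simp]: "A \<in> Ob D \<Longrightarrow> hcod D (hun D A) = A" using a7 by blast
lemma hcmp_Hor[simp]: "J \<in> Hor D \<Longrightarrow> H \<in> Hor D \<Longrightarrow> hcod D J = hdom D H \<Longrightarrow> hcmp D J H \<in> Hor D" using a8 by blast
lemma hcmp_dom[simp]: "J \<in> Hor D \<Longrightarrow> H \<in> Hor D \<Longrightarrow> hcod D J = hdom D H \<Longrightarrow> hdom D (hcmp D J H) = hdom D J" using a8 by blast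
lemma hcmp_cod[simp]: "J \<in> Hor D \<Longrightarrow> H \<in> Hor D \<Longrightarrow> hcod D J = hdom D H \<Longrightarrow> hcod D (hcmp D J H) = hcod D H" using a8 by blast

lemma src_Hor[simp]: "\<phi> \<in> Cel D \<Longrightarrow> src D \<phi> \<in> Hor D" using a9 by blast
lemma tgt_Hor[simp]: "\<phi> \<in> Cel D \<Longrightarrow> tgt D \<phi> \<in> Hor D" using a9 by blast
lemma lft_Ver[simp]: "\<phi> \<in> Cel D \<Longrightarrow> lft D \<phi> \<in> Ver D" using a9 by blast
lemma rgt_Ver[simp]: "\<phi> \<in> Cel D \<Longrightarrow> rgt D \<phi> \<in> Ver D" using a9 by blast
lemma lft_dom: "\<phi> \<in> Cel D \<Longrightarrow> vdom D (lft D \<phi>) = hdom D (src D \<phi>)" using a9 by blast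
lemma lft_cod: "\<phi> \<in> Cel D \<Longrightarrow> vcod D (lft D \<phi>) = hdom D (tgt D \<phi>)" using a9 by blast
lemma rgt_dom: "\<phi> \<in> Cel D \<Longrightarrow> vdom D (rgt D \<phi>) = hcod D (src D \<phi>)" using a9 by blast
lemma rgt_cod: "\<phi> \<in> Cel D \<Longrightarrow> vcod D (rgt D \<phi>) = hcod D (tgt D \<phi>)" using a9 by blast

lemma cid_Cel[simp]: "J \<in> Hor D \<Longrightarrow> cid D J \<in> Cel D" using a10 by blast
lemma cid_src[simp]: "J \<in> Hor D \<Longrightarrow> src D (cid D J) = J" using a10 by blast
lemma cid_tgt[simp]: "J \<in> Hor D \<Longrightarrow> tgt D (cid D J) = J" using a10 by blast
lemma cid_lft[simp]: "J \<in> Hor D \<Longrightarrow> lft D (cid D J) = vid D (hdom D J)" using a10 by blast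
lemma cid_rgt[simp]: "J \<in> Hor D \<Longrightarrow> rgt D (cid D J) = vid D (hcod D J)" using a10 by blast

lemma cv_Cel[simp]: "\<phi> \<in> Cel D \<Longrightarrow> \<psi> \<in> Cel D \<Longrightarrow> tgt D \<phi> = src D \<psi> \<Longrightarrow> cv D \<psi> \<phi> \<in> Cel D" using a11 by blast
lemma cv_src[simp]: "\<phi> \<in> Cel D \<Longrightarrow> \<psi> \<in> Cel D \<Longrightarrow> tgt D \<phi> = src D \<psi> \<Longrightarrow> src D (cv D \<psi> \<phi>) = src D \<phi>" using a11 by blast
lemma cv_tgt[simp]: "\<phi> \<in> Cel D \<Longrightarrow> \<psi> \<in> Cel D \<Longrightarrow> tgt D \<phi> = src D \<psi> \<Longrightarrow> tgt D (cv D \<psi> \<phi>) = tgt D \<psi>" using a11 by blast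
lemma cv_lft[simp]: "\<phi> \<in> Cel D \<Longrightarrow> \<psi> \<in> Cel D \<Longrightarrow> tgt D \<phi> = src D \<psi> \<Longrightarrow> lft D (cv D \<psi> \<phi>) = vcmp D (lft D \<psi>) (lft D \<phi>)" using a11 by blast
lemma cv_rgt[simp]: "\<phi> \<in> Cel D \<Longrightarrow> \<psi> \<in> Cel D \<Longrightarrow> tgt D \<phi> = src D \<psi> \<Longrightarrow> rgt D (cv D \<psi> \<phi>) = vcmp D (rgt D \<psi>) (rgt D \<phi>)" using a11 by blast
lemma cv_cid_r[simp]: "\<phi> \<in> Cel D \<Longrightarrow> src D \<phi> = J \<Longrightarrow> cv D \<phi> (cid D J) = \<phi>" using a12 by blast
lemma cv_cid_l[simp]: "\<phi> \<in> Cel D \<Longrightarrow> tgt D \<phi> = J \<Longrightarrow> cv D (cid D J) \<phi> = \<phi>" using a12 by blast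
lemma cv_assoc: "\<phi> \<in> Cel D \<Longrightarrow> \<psi> \<in> Cel D \<Longrightarrow> \<chi> \<in> Cel D \<Longrightarrow> tgt D \<phi> = src D \<psi> \<Longrightarrow> tgt D \<psi> = src D \<chi>
   \<Longrightarrow> cv D (cv D \<chi> \<psi>) \<phi> = cv D \<chi> (cv D \<psi> \<phi>)" using a13 by metis

lemma cun_Cel[simp]: "f \<in> Ver D \<Longrightarrow> cun D f \<in> Cel D" using a14 by blast
lemma cun_src[simp]: "f \<in> Ver D \<Longrightarrow> src D (cun D f) = hun D (vdom D f)" using a14 by blast
lemma cun_tgt[simp]: "f \<in> Ver D \<Longrightarrow> tgt D (cun D f) = hun D (vcod D f)" using a14 by blast
lemma cun_lft[simp]: "f \<in> Ver D \<Longrightarrow> lft D (cun D f) = f" using a14 by blast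
lemma cun_rgt[simp]: "f \<in> Ver D \<Longrightarrow> rgt D (cun D f) = f" using a14 by blast
lemma cun_vid[simp]: "A \<in> Ob D \<Longrightarrow> cun D (vid D A) = cid D (hun D A)" using a15 by blast
lemma cun_vcmp: "f \<in> Ver D \<Longrightarrow> g \<in> Ver D \<Longrightarrow> vcod D f = vdom D g \<Longrightarrow> cun D (vcmp D g f) = cv D (cun D g) (cun D f)" using a16 by blast

lemma ch_Cel[simp]: "\<phi> \<in> Cel D \<Longrightarrow> \<psi> \<in> Cel D \<Longrightarrow> hcod D (src D \<phi>) = hdom D (src D \<psi>) \<Longrightarrow> rgt D \<phi> = lft D \<psi> \<Longrightarrow> ch D \<phi> \<psi> \<in> Cel D" using a17 by blast
lemma ch_src[simp]: "\<phi> \<in> Cel D \<Longrightarrow> \<psi> \<in> Cel D \<Longrightarrow> hcod D (src D \<phi>) = hdom D (src D \<psi>) \<Longrightarrow> rgt D \<phi> = lft D \<psi> \<Longrightarrow> src D (ch D \<phi> \<psi>) = hcmp D (src D \<phi>) (src D \<psi>)" using a17 by blast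
lemma ch_tgt[simp]: "\<phi> \<in> Cel D \<Longrightarrow> \<psi> \<in> Cel D \<Longrightarrow> hcod D (src D \<phi>) = hdom D (src D \<psi>) \<Longrightarrow> rgt D \<phi> = lft D \<psi> \<Longrightarrow> tgt D (ch D \<phi> \<psi>) = hcmp D (tgt D \<phi>) (tgt D \<psi>)" using a17 by blast
lemma ch_lft[simp]: "\<phi> \<in> Cel D \<Longrightarrow> \<psi> \<in> Cel D \<Longrightarrow> hcod D (src D \<phi>) = hdom D (src D \<psi>) \<Longrightarrow> rgt D \<phi> = lft D \<psi> \<Longrightarrow> lft D (ch D \<phi> \<psi>) = lft D \<phi>" using a17 by blast
lemma ch_rgt[simp]: "\<phi> \<in> Cel D \<Longrightarrow> \<psi> \<in> Cel D \<Longrightarrow> hcod D (src D \<phi>) = hdom D (src D \<psi>) \<Longrightarrow> rgt D \<phi> = lft D \<psi> \<Longrightarrow> rgt D (ch D \<phi> \<psi>) = rgt D \<psi>" using a17 by blast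
lemma ch_cid[simp]: "J \<in> Hor D \<Longrightarrow> H \<in> Hor D \<Longrightarrow> hcod D J = hdom D H \<Longrightarrow> ch D (cid D J) (cid D H) = cid D (hcmp D J H)" using a18 by blast
lemma interchange: "\<phi> \<in> Cel D \<Longrightarrow> \<psi> \<in> Cel D \<Longrightarrow> tgt D \<phi> = src D \<psi> \<Longrightarrow>
   \<phi>' \<in> Cel D \<Longrightarrow> \<psi>' \<in> Cel D \<Longrightarrow> tgt D \<phi>' = src D \<psi>' \<Longrightarrow>
   hcod D (src D \<phi>) = hdom D (src D \<phi>') \<Longrightarrow> rgt D \<phi> = lft D \<phi>' \<Longrightarrow>
   hcod D (src D \<psi>) = hdom D (src D \<psi>') \<Longrightarrow> rgt D \<psi> = lft D \<psi>' \<Longrightarrow>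
   ch D (cv D \<psi> \<phi>) (cv D \<psi>' \<phi>') = cv D (ch D \<psi> \<psi>') (ch D \<phi> \<phi>')"
  using a19 by metis

lemma lu_glob: "J \<in> Hor D \<Longrightarrow> globular D (lu D J) (hcmp D (hun D (hdom D J)) J) J \<and> iso_cell D (lu D J)" using a21 by blast
lemma ru_glob: "J \<in> Hor D \<Longrightarrow> globular D (ru D J) (hcmp D J (hun D (hcod D J))) J \<and> iso_cell D (ru D J)" using a22 by blast
lemma asc_glob: "J \<in> Hor D \<Longrightarrow> H \<in> Hor D \<Longrightarrow> K \<in> Hor D \<Longrightarrow> hcod D J = hdom D H \<Longrightarrow> hcod D H = hdom D K \<Longrightarrow>
  globular D (asc D J H K) (hcmp D (hcmp D J H) K) (hcmp D J (hcmp D H K)) \<and> iso_cell D (asc D J H K)" using a20 by blast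

lemma lu_Cel[simp]: "J \<in> Hor D \<Longrightarrow> lu D J \<in> Cel D" using lu_glob unfolding globular_def by blast
lemma lu_src[simp]: "J \<in> Hor D \<Longrightarrow> src D (lu D J) = hcmp D (hun D (hdom D J)) J" using lu_glob unfolding globular_def by blast
lemma lu_tgt[simp]: "J \<in> Hor D \<Longrightarrow> tgt D (lu D J) = J" using lu_glob unfolding globular_def by blast
lemma lu_lft[simp]: "J \<in> Hor D \<Longrightarrow> lft D (lu D J) = vid D (hdom D J)" using lu_glob unfolding globular_def by simp
lemma lu_rgt[simp]: "J \<in> Hor D \<Longrightarrow> rgt D (lu D J) = vid D (hcod D J)" using lu_glob unfolding globular_def by simp
lemma lu_iso: "J \<in> Hor D \<Longrightarrow> iso_cell D (lu D J)" using lu_glob by blast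
lemma ru_Cel[simp]: "J \<in> Hor D \<Longrightarrow> ru D J \<in> Cel D" using ru_glob unfolding globular_def by blast
lemma ru_src[simp]: "J \<in> Hor D \<Longrightarrow> src D (ru D J) = hcmp D J (hun D (hcod D J))" using ru_glob unfolding globular_def by blast
lemma ru_tgt[simp]: "J \<in> Hor D \<Longrightarrow> tgt D (ru D J) = J" using ru_glob unfolding globular_def by blast
lemma ru_lft[simp]: "J \<in> Hor D \<Longrightarrow> lft D (ru D J) = vid D (hdom D J)" using ru_glob unfolding globular_def by simp
lemma ru_rgt[simp]: "J \<in> Hor D \<Longrightarrow> rgt D (ru D J) = vid D (hcod D J)" using ru_glob unfolding globular_def by simp
lemma ru_iso: "J \<in> Hor D \<Longrightarrow> iso_cell D (ru D J)" using ru_glob by blast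
lemma asc_Cel[simp]: "J \<in> Hor D \<Longrightarrow> H \<in> Hor D \<Longrightarrow> K \<in> Hor D \<Longrightarrow> hcod D J = hdom D H \<Longrightarrow> hcod D H = hdom D K \<Longrightarrow> asc D J H K \<in> Cel D"
  using asc_glob unfolding globular_def by blast
lemma asc_src[simp]: "J \<in> Hor D \<Longrightarrow> H \<in> Hor D \<Longrightarrow> K \<in> Hor D \<Longrightarrow> hcod D J = hdom D H \<Longrightarrow> hcod D H = hdom D K \<Longrightarrow> src D (asc D J H K) = hcmp D (hcmp D J H) K"
  using asc_glob unfolding globular_def by blast
lemma asc_tgt[simp]: "J \<in> Hor D \<Longrightarrow> H \<in> Hor D \<Longrightarrow> K \<in> Hor D \<Longrightarrow> hcod D J = hdom D H \<Longrightarrow> hcod D H = hdom D K \<Longrightarrow> tgt D (asc D J H K) = hcmp D J (hcmp D H K)"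
  using asc_glob unfolding globular_def by blast
lemma asc_lft[simp]: "J \<in> Hor D \<Longrightarrow> H \<in> Hor D \<Longrightarrow> K \<in> Hor D \<Longrightarrow> hcod D J = hdom D H \<Longrightarrow> hcod D H = hdom D K \<Longrightarrow> lft D (asc D J H K) = vid D (hdom D J)"
  using asc_glob unfolding globular_def by simp
lemma asc_rgt[simp]: "J \<in> Hor D \<Longrightarrow> H \<in> Hor D \<Longrightarrow> K \<in> Hor D \<Longrightarrow> hcod D J = hdom D H \<Longrightarrow> hcod D H = hdom D K \<Longrightarrow> rgt D (asc D J H K) = vid D (hcod D K)"
  using asc_glob unfolding globular_def by simp
lemma asc_iso: "J \<in> Hor D \<Longrightarrow> H \<in> Hor D \<Longrightarrow> K \<in> Hor D \<Longrightarrow> hcod D J = hdom D H \<Longrightarrow> hcod D H = hdom D K \<Longrightarrow> iso_cell D (asc D J H K)"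
  using asc_glob by blast

lemma asc_nat: "\<phi> \<in> Cel D \<Longrightarrow> \<psi> \<in> Cel D \<Longrightarrow> \<chi> \<in> Cel D \<Longrightarrow> hcod D (src D \<phi>) = hdom D (src D \<psi>) \<Longrightarrow> rgt D \<phi> = lft D \<psi>
  \<Longrightarrow> hcod D (src D \<psi>) = hdom D (src D \<chi>) \<Longrightarrow> rgt D \<psi> = lft D \<chi> \<Longrightarrow>
   cv D (asc D (tgt D \<phi>) (tgt D \<psi>) (tgt D \<chi>)) (ch D (ch D \<phi> \<psi>) \<chi>)
        = cv D (ch D \<phi> (ch D \<psi> \<chi>)) (asc D (src D \<phi>) (src D \<psi>) (src D \<chi>))" using a23 by blast
lemma lu_nat: "\<phi> \<in> Cel D \<Longrightarrow> cv D \<phi> (lu D (src D \<phi>)) = cv D (lu D (tgt D \<phi>)) (ch D (cun D (lft D \<phi>)) \<phi>)" using a24 by blast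
lemma ru_nat: "\<phi> \<in> Cel D \<Longrightarrow> cv D \<phi> (ru D (src D \<phi>)) = cv D (ru D (tgt D \<phi>)) (ch D \<phi> (cun D (rgt D \<phi>)))" using a25 by blast
lemma pentagon: "J \<in> Hor D \<Longrightarrow> H \<in> Hor D \<Longrightarrow> K \<in> Hor D \<Longrightarrow> L \<in> Hor D \<Longrightarrow> hcod D J = hdom D H \<Longrightarrow> hcod D H = hdom D K \<Longrightarrow> hcod D K = hdom D L \<Longrightarrow>
        cv D (asc D J H (hcmp D K L)) (asc D (hcmp D J H) K L)
        = cv D (ch D (cid D J) (asc D H K L))
            (cv D (asc D J (hcmp D H K) L) (ch D (asc D J H K) (cid D L)))" using a26 by blast
lemma triangle: "J \<in> Hor D \<Longrightarrow> H \<in> Hor D \<Longrightarrow> hcod D J = hdom D H \<Longrightarrow>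
        cv D (ch D (cid D J) (lu D H)) (asc D J (hun D (hcod D J)) H) = ch D (ru D J) (cid D H)" using a27 by blast

lemma inv_unique: assumes "\<phi> \<in> Cel D" "\<psi> \<in> Cel D" "\<psi>' \<in> Cel D" "tgt D \<phi> = src D \<psi>" "tgt D \<psi> = src D \<phi>"
  "tgt D \<phi> = src D \<psi>'" "tgt D \<psi>' = src D \<phi>" "cv D \<psi> \<phi> = cid D (src D \<phi>)" "cv D \<phi> \<psi>' = cid D (tgt D \<phi>)"
  shows "\<psi> = \<psi>'"
proof -
  have "\<psi> = cv D \<psi> (cid D (tgt D \<phi>))" using assms(2,4) by (metis cv_cid_r)
  also have "\<dots> = cv D \<psi> (cv D \<phi> \<psi>')" using assms(9) by simp
  also have "\<dots> = cv D (cv D \<psi> \<phi>) \<psi>'" using assms(1-7) by (simp add: cv_assoc)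
  also have "\<dots> = \<psi>'" using assms(3,7,8) by (metis cv_cid_l)
  finally show ?thesis .
qed

lemma cinv_props: assumes "iso_cell D \<phi>"
  shows "cinv D \<phi> \<in> Cel D \<and> tgt D \<phi> = src D (cinv D \<phi>) \<and> tgt D (cinv D \<phi>) = src D \<phi> \<and>
        cv D (cinv D \<phi>) \<phi> = cid D (src D \<phi>) \<and> cv D \<phi> (cinv D \<phi>) = cid D (tgt D \<phi>)"
proof -
  obtain \<psi> where p: "\<psi> \<in> Cel D" "tgt D \<phi> = src D \<psi>" "tgt D \<psi> = src D \<phi>"
        "cv D \<psi> \<phi> = cid D (src D \<phi>)" "cv D \<phi> \<psi> = cid D (tgt D \<phi>)"
    using assms unfolding iso_cell_def by blast
  have c: "\<phi> \<in> Cel D" using assms unfolding iso_cell_def by blast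
  show ?thesis unfolding cinv_def
    apply (rule theI[where a=\<psi>])
    using p apply blast
    using inv_unique[OF c] p by metis
qed

lemma cinv_Cel[simp]: "iso_cell D \<phi> \<Longrightarrow> cinv D \<phi> \<in> Cel D" using cinv_props by blast
lemma cinv_src[simp]: "iso_cell D \<phi> \<Longrightarrow> src D (cinv D \<phi>) = tgt D \<phi>" using cinv_props by metis
lemma cinv_tgt[simp]: "iso_cell D \<phi> \<Longrightarrow> tgt D (cinv D \<phi>) = src D \<phi>" using cinv_props by metis
lemma cinv_l[simp]: "iso_cell D \<phi> \<Longrightarrow> cv D (cinv D \<phi>) \<phi> = cid D (src D \<phi>)" using cinv_props by metis
lemma cinv_r[simp]: "iso_cell D \<phi> \<Longrightarrow> cv D \<phi> (cinv D \<phi>) = cid D (tgt D \<phi>)" using cinv_props by metis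
lemma iso_Cel: "iso_cell D \<phi> \<Longrightarrow> \<phi> \<in> Cel D" unfolding iso_cell_def by blast



lemma iso_mono: assumes "iso_cell D \<phi>" "x \<in> Cel D" "y \<in> Cel D" "tgt D x = src D \<phi>" "tgt D y = src D \<phi>"
  "cv D \<phi> x = cv D \<phi> y" shows "x = y"
proof -
  have "\<And>z. z \<in> Cel D \<Longrightarrow> tgt D z = src D \<phi> \<Longrightarrow> z = cv D (cinv D \<phi>) (cv D \<phi> z)"
  proof -
    fix z assume z: "z \<in> Cel D" "tgt D z = src D \<phi>"
    have "z = cv D (cv D (cinv D \<phi>) \<phi>) z" using assms(1) z by simp
    also have "\<dots> = cv D (cinv D \<phi>) (cv D \<phi> z)" using assms(1) z by (intro cv_assoc) (simp_all add: iso_Cel)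
    finally show "z = cv D (cinv D \<phi>) (cv D \<phi> z)" .
  qed
  thus ?thesis using assms by metis
qed

lemma iso_epi: assumes "iso_cell D \<phi>" "x \<in> Cel D" "y \<in> Cel D" "src D x = tgt D \<phi>" "src D y = tgt D \<phi>"
  "cv D x \<phi> = cv D y \<phi>" shows "x = y"
proof -
  have "\<And>z. z \<in> Cel D \<Longrightarrow> src D z = tgt D \<phi> \<Longrightarrow> z = cv D (cv D z \<phi>) (cinv D \<phi>)"
  proof -
    fix z assume z: "z \<in> Cel D" "src D z = tgt D \<phi>"
    have "z = cv D z (cv D \<phi> (cinv D \<phi>))" using assms(1) z by simp
    also have "\<dots> = cv D (cv D z \<phi>) (cinv D \<phi>)" using assms(1) z by (simp add: cv_assoc iso_Cel)
    finally show "z = cv D (cv D z \<phi>) (cinv D \<phi>)" .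
  qed
  thus ?thesis using assms by metis
qed

lemma cinv_lft[simp]: assumes "iso_cell D \<phi>" "lft D \<phi> = vid D (vdom D (lft D \<phi>))" shows "lft D (cinv D \<phi>) = lft D \<phi>"
proof -
  have c: "\<phi> \<in> Cel D" using assms iso_Cel by blast
  define B where "B = vdom D (lft D \<phi>)"
  have l: "lft D \<phi> = vid D B" using assms B_def by simp
  have B: "B \<in> Ob D" using c B_def by simp
  have sB: "hdom D (src D \<phi>) = B" using c B_def lft_dom by metis
  have tB: "hdom D (tgt D \<phi>) = B" using c lft_cod[of \<phi>] l B by simp
  have ci: "cinv D \<phi> \<in> Cel D" using assms by simp
  have "lft D (cv D (cinv D \<phi>) \<phi>) = vcmp D (lft D (cinv D \<phi>)) (vid D B)" using assms(1) c l by (metis cv_lft cinv_Cel cinv_src)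
  moreover have "lft D (cv D (cinv D \<phi>) \<phi>) = vid D B" using assms c sB by simp
  moreover have "vdom D (lft D (cinv D \<phi>)) = B" using ci lft_dom[of "cinv D \<phi>"] assms tB by simp
  ultimately show ?thesis using ci l by (metis lft_Ver vcmp_vid_r)
qed

lemma cinv_rgt[simp]: assumes "iso_cell D \<phi>" "rgt D \<phi> = vid D (vdom D (rgt D \<phi>))" shows "rgt D (cinv D \<phi>) = rgt D \<phi>"
proof -
  have c: "\<phi> \<in> Cel D" using assms iso_Cel by blast
  define B where "B = vdom D (rgt D \<phi>)"
  have l: "rgt D \<phi> = vid D B" using assms B_def by simp
  have B: "B \<in> Ob D" using c B_def by simp
  have sB: "hcod D (src D \<phi>) = B" using c B_def rgt_dom by metis
  have tB: "hcod D (tgt D \<phi>) = B" using c rgt_cod[of \<phi>] l B by simp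
  have ci: "cinv D \<phi> \<in> Cel D" using assms by simp
  have "rgt D (cv D (cinv D \<phi>) \<phi>) = vcmp D (rgt D (cinv D \<phi>)) (vid D B)" using assms(1) c l by (metis cv_rgt cinv_Cel cinv_src)
  moreover have "rgt D (cv D (cinv D \<phi>) \<phi>) = vid D B" using assms c sB by simp
  moreover have "vdom D (rgt D (cinv D \<phi>)) = B" using ci rgt_dom[of "cinv D \<phi>"] assms tB by simp
  ultimately show ?thesis using ci l by (metis rgt_Ver vcmp_vid_r)
qed

lemma cinv_iso: "iso_cell D \<phi> \<Longrightarrow> iso_cell D (cinv D \<phi>)"
  unfolding iso_cell_def[of D "cinv D \<phi>"] using iso_Cel[of \<phi>] by (intro conjI cinv_Cel bexI[of _ \<phi>]) auto

lemmas isos[simp] = lu_iso ru_iso asc_iso cinv_iso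

lemma iso_cv: assumes "iso_cell D \<phi>" "iso_cell D \<psi>" "tgt D \<phi> = src D \<psi>" shows "iso_cell D (cv D \<psi> \<phi>)"
proof -
  have c: "\<phi> \<in> Cel D" "\<psi> \<in> Cel D" using assms iso_Cel by auto
  show ?thesis unfolding iso_cell_def
  proof (intro conjI bexI[of _ "cv D (cinv D \<phi>) (cinv D \<psi>)"])
    show "cv D (cv D (cinv D \<phi>) (cinv D \<psi>)) (cv D \<psi> \<phi>) = cid D (src D (cv D \<psi> \<phi>))"
      using assms c by (simp add: cv_assoc, simp add: cv_assoc[symmetric])
    show "cv D (cv D \<psi> \<phi>) (cv D (cinv D \<phi>) (cinv D \<psi>)) = cid D (tgt D (cv D \<psi> \<phi>))"
      using assms c by (simp add: cv_assoc, simp add: cv_assoc[symmetric])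
  qed (use assms c in auto)
qed

lemma iso_ch: assumes "iso_cell D \<phi>" "iso_cell D \<psi>" "hcod D (src D \<phi>) = hdom D (src D \<psi>)"
  "rgt D \<phi> = lft D \<psi>" "rgt D \<phi> = vid D (vdom D (rgt D \<phi>))" "lft D \<psi> = vid D (vdom D (lft D \<psi>))"
  shows "iso_cell D (ch D \<phi> \<psi>)"
proof -
  have c: "\<phi> \<in> Cel D" "\<psi> \<in> Cel D" using assms iso_Cel by auto
  have h: "hcod D (tgt D \<phi>) = hdom D (tgt D \<psi>)" using assms c rgt_cod[of \<phi>] lft_cod[of \<psi>] by metis
  have h2: "hcod D (src D (cinv D \<phi>)) = hdom D (src D (cinv D \<psi>))" using h assms by simp
  show ?thesis unfolding iso_cell_def
  proof (intro conjI bexI[of _ "ch D (cinv D \<phi>) (cinv D \<psi>)"])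
    show "cv D (ch D (cinv D \<phi>) (cinv D \<psi>)) (ch D \<phi> \<psi>) = cid D (src D (ch D \<phi> \<psi>))"
      using assms c h h2 by (subst interchange[symmetric]) simp_all
    show "cv D (ch D \<phi> \<psi>) (ch D (cinv D \<phi>) (cinv D \<psi>)) = cid D (tgt D (ch D \<phi> \<psi>))"
      using assms c h h2 by (subst interchange[symmetric]) simp_all
  qed (use assms c h h2 in auto)
qed

end

context DC begin

lemma iso_cid[simp]: "J \<in> Hor D \<Longrightarrow> iso_cell D (cid D J)"
  unfolding iso_cell_def by (intro conjI cid_Cel bexI[of _ "cid D J"]) auto

lemma K1: assumes J: "J \<in> Hor D" and H: "H \<in> Hor D" and JH: "hcod D J = hdom D H"
  shows "cv D (lu D (hcmp D J H)) (asc D (hun D (hdom D J)) J H) = ch D (lu D J) (cid D H)"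
proof -
  define A where "A = hdom D J"
  define U where "U = hun D A"
  have A: "A \<in> Ob D" using J A_def by simp
  have U: "U \<in> Hor D" "hdom D U = A" "hcod D U = A" using A U_def by auto
  have JA: "hdom D J = A" using A_def by simp
  have Ueq: "hun D A = U" using U_def by simp
  note simps = J H JH U JA A Ueq
  let ?JH = "hcmp D J H"
  let ?X1 = "cv D (lu D ?JH) (asc D U J H)"
  let ?X2 = "ch D (lu D J) (cid D H)"
  let ?R = "cv D (asc D U (hcmp D U J) H) (ch D (asc D U U J) (cid D H))"
  have Riso: "iso_cell D ?R" using simps by (intro iso_cv iso_ch) simp_all
  have s1: "ch D (cid D U) ?X1 = cv D (ch D (cid D U) (lu D ?JH)) (ch D (cid D U) (asc D U J H))"
    using interchange[of "cid D U" "cid D U" "asc D U J H" "lu D ?JH"] simps by simp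
  have s2: "cv D (ch D (cid D U) (asc D U J H)) ?R = cv D (asc D U U ?JH) (asc D (hcmp D U U) J H)"
    using pentagon[of U U J H] simps by simp
  have s3: "cv D (ch D (cid D U) (lu D ?JH)) (asc D U U ?JH) = ch D (ru D U) (cid D ?JH)"
    using triangle[of U ?JH] simps by simp
  have s4: "cv D (ch D (ru D U) (cid D ?JH)) (asc D (hcmp D U U) J H) = cv D (asc D U J H) (ch D (ch D (ru D U) (cid D J)) (cid D H))"
    using asc_nat[of "ru D U" "cid D J" "cid D H"] simps by simp
  have s5: "ch D (ru D U) (cid D J) = cv D (ch D (cid D U) (lu D J)) (asc D U U J)"
    using triangle[of U J] simps by simp
  have s6: "ch D (cv D (ch D (cid D U) (lu D J)) (asc D U U J)) (cid D H) = cv D (ch D (ch D (cid D U) (lu D J)) (cid D H)) (ch D (asc D U U J) (cid D H))"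
    using interchange[of "asc D U U J" "ch D (cid D U) (lu D J)" "cid D H" "cid D H"] simps by simp
  have s7: "cv D (asc D U J H) (ch D (ch D (cid D U) (lu D J)) (cid D H)) = cv D (ch D (cid D U) ?X2) (asc D U (hcmp D U J) H)"
    using asc_nat[of "cid D U" "lu D J" "cid D H"] simps by simp
  have "cv D (ch D (cid D U) ?X1) ?R = cv D (ch D (cid D U) (lu D ?JH)) (cv D (ch D (cid D U) (asc D U J H)) ?R)"
    unfolding s1 using simps by (intro cv_assoc) simp_all
  also have "\<dots> = cv D (ch D (cid D U) (lu D ?JH)) (cv D (asc D U U ?JH) (asc D (hcmp D U U) J H))"
    unfolding s2 ..
  also have "\<dots> = cv D (ch D (ru D U) (cid D ?JH)) (asc D (hcmp D U U) J H)"
    unfolding s3[symmetric] using simps by (intro cv_assoc[symmetric]) simp_all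
  also have "\<dots> = cv D (asc D U J H) (cv D (ch D (ch D (cid D U) (lu D J)) (cid D H)) (ch D (asc D U U J) (cid D H)))"
    unfolding s4 s5 s6 ..
  also have "\<dots> = cv D (cv D (asc D U J H) (ch D (ch D (cid D U) (lu D J)) (cid D H))) (ch D (asc D U U J) (cid D H))"
    using simps by (intro cv_assoc[symmetric]) simp_all
  also have "\<dots> = cv D (ch D (cid D U) ?X2) ?R"
    unfolding s7 using simps by (intro cv_assoc) simp_all
  finally have m: "cv D (ch D (cid D U) ?X1) ?R = cv D (ch D (cid D U) ?X2) ?R" .
  have m2: "ch D (cid D U) ?X1 = ch D (cid D U) ?X2"
    using iso_epi[OF Riso _ _ _ _ m] simps by simp
  have n1: "cv D ?X1 (lu D (hcmp D (hcmp D U J) H)) = cv D (lu D ?JH) (ch D (cid D U) ?X1)"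
    using lu_nat[of ?X1] simps by simp
  have n2: "cv D ?X2 (lu D (hcmp D (hcmp D U J) H)) = cv D (lu D ?JH) (ch D (cid D U) ?X2)"
    using lu_nat[of ?X2] simps by simp
  have "?X1 = ?X2" using iso_epi[of "lu D (hcmp D (hcmp D U J) H)" ?X1 ?X2] n1 n2 m2 simps by simp
  thus ?thesis unfolding U_def A_def .
qed

lemma LR: assumes A: "A \<in> Ob D" shows "lu D (hun D A) = ru D (hun D A)"
proof -
  define U where "U = hun D A"
  have U: "U \<in> Hor D" "hdom D U = A" "hcod D U = A" "hun D A = U" using A U_def by auto
  note simps = U A
  have a: "lu D (hcmp D U U) = ch D (cid D U) (lu D U)"
    using iso_mono[of "lu D U" "lu D (hcmp D U U)" "ch D (cid D U) (lu D U)"] lu_nat[of "lu D U"] simps by simp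
  have b: "cv D (lu D (hcmp D U U)) (asc D U U U) = ch D (lu D U) (cid D U)"
    using K1[of U U] simps by simp
  have c: "cv D (ch D (cid D U) (lu D U)) (asc D U U U) = ch D (ru D U) (cid D U)"
    using triangle[of U U] simps by simp
  have d: "ch D (lu D U) (cid D U) = ch D (ru D U) (cid D U)" using a b c by simp
  have e1: "cv D (lu D U) (ru D (hcmp D U U)) = cv D (ru D U) (ch D (lu D U) (cid D U))"
    using ru_nat[of "lu D U"] simps by simp
  have e2: "cv D (ru D U) (ru D (hcmp D U U)) = cv D (ru D U) (ch D (ru D U) (cid D U))"
    using ru_nat[of "ru D U"] simps by simp
  have "lu D U = ru D U" using iso_epi[of "ru D (hcmp D U U)" "lu D U" "ru D U"] e1 e2 d simps by simp
  thus ?thesis using U_def by simp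
qed
end

context DC begin

lemma cart_E: assumes "cartesian D p" "\<chi> \<in> Cel D" "vseq D (lft D p) h" "vseq D (rgt D p) k"
  "tgt D \<chi> = tgt D p" "lft D \<chi> = vcmp D (lft D p) h" "rgt D \<chi> = vcmp D (rgt D p) k"
  shows "\<exists>!\<theta>. \<theta> \<in> Cel D \<and> src D \<theta> = src D \<chi> \<and> tgt D \<theta> = src D p \<and>
             lft D \<theta> = h \<and> rgt D \<theta> = k \<and> cv D p \<theta> = \<chi>"
proof -
  have "\<forall>\<chi> h k. \<chi> \<in> Cel D \<and> vseq D (lft D p) h \<and> vseq D (rgt D p) k \<and>
        tgt D \<chi> = tgt D p \<and> lft D \<chi> = vcmp D (lft D p) h \<and> rgt D \<chi> = vcmp D (rgt D p) k
      \<longrightarrow> (\<exists>!\<theta>. \<theta> \<in> Cel D \<and> src D \<theta> = src D \<chi> \<and> tgt D \<theta> = src D p \<and>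
             lft D \<theta> = h \<and> rgt D \<theta> = k \<and> cv D p \<theta> = \<chi>)"
    using assms(1) unfolding cartesian_def by (rule conjunct2)
  hence "\<chi> \<in> Cel D \<and> vseq D (lft D p) h \<and> vseq D (rgt D p) k \<and>
        tgt D \<chi> = tgt D p \<and> lft D \<chi> = vcmp D (lft D p) h \<and> rgt D \<chi> = vcmp D (rgt D p) k
      \<longrightarrow> (\<exists>!\<theta>. \<theta> \<in> Cel D \<and> src D \<theta> = src D \<chi> \<and> tgt D \<theta> = src D p \<and>
             lft D \<theta> = h \<and> rgt D \<theta> = k \<and> cv D p \<theta> = \<chi>)"
    by (elim allE)
  thus ?thesis using assms(2-7) by (elim impE) (intro conjI; assumption)
qed

lemma cart_unique: assumes "cartesian D p" "\<theta> \<in> Cel D" "\<theta>' \<in> Cel D" "src D \<theta> = src D \<theta>'"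
  "tgt D \<theta> = src D p" "tgt D \<theta>' = src D p" "lft D \<theta> = lft D \<theta>'" "rgt D \<theta> = rgt D \<theta>'"
  "cv D p \<theta> = cv D p \<theta>'" shows "\<theta> = \<theta>'"
proof -
  have p: "p \<in> Cel D" using assms(1) unfolding cartesian_def by blast
  have vs1: "vseq D (lft D p) (lft D \<theta>)" unfolding vseq_def using assms p lft_cod[of \<theta>] lft_dom[of p] by simp
  have vs2: "vseq D (rgt D p) (rgt D \<theta>)" unfolding vseq_def using assms p rgt_cod[of \<theta>] rgt_dom[of p] by simp
  have ch: "cv D p \<theta> \<in> Cel D" "tgt D (cv D p \<theta>) = tgt D p" "lft D (cv D p \<theta>) = vcmp D (lft D p) (lft D \<theta>)"
     "rgt D (cv D p \<theta>) = vcmp D (rgt D p) (rgt D \<theta>)" "src D (cv D p \<theta>) = src D \<theta>" using assms p by auto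
  have u: "\<exists>!\<theta>''. \<theta>'' \<in> Cel D \<and> src D \<theta>'' = src D (cv D p \<theta>) \<and> tgt D \<theta>'' = src D p \<and>
             lft D \<theta>'' = lft D \<theta> \<and> rgt D \<theta>'' = rgt D \<theta> \<and> cv D p \<theta>'' = cv D p \<theta>"
    by (rule cart_E[OF assms(1) ch(1) vs1 vs2 ch(2-4)])
  have a: "\<theta> \<in> Cel D \<and> src D \<theta> = src D (cv D p \<theta>) \<and> tgt D \<theta> = src D p \<and>
             lft D \<theta> = lft D \<theta> \<and> rgt D \<theta> = rgt D \<theta> \<and> cv D p \<theta> = cv D p \<theta>" using assms ch by simp
  have b: "\<theta>' \<in> Cel D \<and> src D \<theta>' = src D (cv D p \<theta>) \<and> tgt D \<theta>' = src D p \<and>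
             lft D \<theta>' = lft D \<theta> \<and> rgt D \<theta>' = rgt D \<theta> \<and> cv D p \<theta>' = cv D p \<theta>" using assms ch by simp
  show ?thesis using u a b by blast
qed

lemma comp_basic: assumes "companion_cell D f p"
  shows "f \<in> Ver D" "p \<in> Cel D" "cartesian D p" "src D p \<in> Hor D" "hdom D (src D p) = vdom D f" "hcod D (src D p) = vcod D f"
   "tgt D p = hun D (vcod D f)" "lft D p = f" "rgt D p = vid D (vcod D f)"
proof -
  show f: "f \<in> Ver D" "cartesian D p" "tgt D p = hun D (vcod D f)" "lft D p = f" "rgt D p = vid D (vcod D f)"
    using assms unfolding companion_cell_def by auto
  show p: "p \<in> Cel D" using f unfolding cartesian_def by blast
  show "src D p \<in> Hor D" using p by simp
  show "hdom D (src D p) = vdom D f" using p f lft_dom by metis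
  show "hcod D (src D p) = vcod D f" using p f rgt_dom[of p] by simp
qed

lemma comp_unit: assumes "companion_cell D f p"
  defines "q \<equiv> companion_unit D f p"
  shows "q \<in> Cel D \<and> src D q = hun D (vdom D f) \<and> tgt D q = src D p
      \<and> lft D q = vid D (vdom D f) \<and> rgt D q = f \<and> cv D p q = cun D f"
proof -
  note b = comp_basic[OF assms(1)]
  have "\<exists>!\<theta>. \<theta> \<in> Cel D \<and> src D \<theta> = src D (cun D f) \<and> tgt D \<theta> = src D p \<and>
             lft D \<theta> = vid D (vdom D f) \<and> rgt D \<theta> = f \<and> cv D p \<theta> = cun D f"
    by (rule cart_E[OF b(3)]) (use b in \<open>simp_all add: vseq_def\<close>)
  hence "\<exists>!\<theta>. \<theta> \<in> Cel D \<and> src D \<theta> = hun D (vdom D f) \<and> tgt D \<theta> = src D p \<and>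
             lft D \<theta> = vid D (vdom D f) \<and> rgt D \<theta> = f \<and> cv D p \<theta> = cun D f" using b by simp
  thus ?thesis unfolding q_def companion_unit_def by (rule theI')
qed

lemma zigzag: assumes "companion_cell D f p"
  shows "cv D (ru D (src D p)) (ch D (companion_unit D f p) p) = lu D (src D p)"
proof -
  note b = comp_basic[OF assms(1)]
  define q where "q = companion_unit D f p"
  note u = comp_unit[OF assms(1), folded q_def]
  define J where "J = src D p"
  define A where "A = vdom D f"
  define C where "C = vcod D f"
  have simps: "f \<in> Ver D" "p \<in> Cel D" "J \<in> Hor D" "hdom D J = A" "hcod D J = C" "tgt D p = hun D C" "lft D p = f"
    "rgt D p = vid D C" "q \<in> Cel D" "src D q = hun D A" "tgt D q = J" "lft D q = vid D A" "rgt D q = f" "cv D p q = cun D f"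
    "src D p = J" "vdom D f = A" "vcod D f = C" "A \<in> Ob D" "C \<in> Ob D"
    using b u J_def A_def C_def by auto
  have e1: "cv D p (cv D (ru D J) (ch D q p)) = cv D (ru D (hun D C)) (ch D (cun D f) p)"
  proof -
    have "cv D p (cv D (ru D J) (ch D q p)) = cv D (cv D p (ru D J)) (ch D q p)"
      using simps by (intro cv_assoc[symmetric]) simp_all
    also have "\<dots> = cv D (cv D (ru D (hun D C)) (ch D p (cid D (hun D C)))) (ch D q p)"
      using ru_nat[of p] simps by simp
    also have "\<dots> = cv D (ru D (hun D C)) (cv D (ch D p (cid D (hun D C))) (ch D q p))"
      using simps by (intro cv_assoc) simp_all
    also have "\<dots> = cv D (ru D (hun D C)) (ch D (cun D f) p)"
      using interchange[of q p p "cid D (hun D C)"] simps by simp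
    finally show ?thesis .
  qed
  have e2: "cv D p (lu D J) = cv D (ru D (hun D C)) (ch D (cun D f) p)"
    using lu_nat[of p] simps LR by simp
  show ?thesis unfolding J_def[symmetric] q_def[symmetric]
    using cart_unique[OF b(3), of "cv D (ru D J) (ch D q p)" "lu D J"] e1 e2 simps by simp
qed

lemma inj_comp: assumes "companion_cell D h p" "Q \<in> Hor D" "hdom D Q = hcod D (src D p)"
  and "\<theta> \<in> Cel D" "tgt D \<theta> = hcmp D (src D p) Q" "lft D \<theta> = vid D (hdom D (src D p))"
  shows "ch D (companion_unit D h p) (cv D (cv D (lu D Q) (ch D p (cid D Q))) \<theta>) = cv D \<theta> (lu D (src D \<theta>))"
proof -
  note b = comp_basic[OF assms(1)]
  define q where "q = companion_unit D h p"
  note u = comp_unit[OF assms(1), folded q_def]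
  define P where "P = src D p"
  define A where "A = vdom D h"
  define C where "C = vcod D h"
  define U where "U = hun D A"
  define E where "E = cv D (lu D Q) (ch D p (cid D Q))"
  have simps: "h \<in> Ver D" "p \<in> Cel D" "P \<in> Hor D" "hdom D P = A" "hcod D P = C" "tgt D p = hun D C" "lft D p = h"
    "rgt D p = vid D C" "q \<in> Cel D" "src D q = U" "tgt D q = P" "lft D q = vid D A" "rgt D q = h" "cv D p q = cun D h"
    "src D p = P" "vdom D h = A" "vcod D h = C" "A \<in> Ob D" "C \<in> Ob D" "hun D A = U" "U \<in> Hor D" "hdom D U = A" "hcod D U = A"
    "Q \<in> Hor D" "hdom D Q = C"
    using b u P_def A_def C_def U_def assms by auto
  have th: "\<theta> \<in> Cel D" "tgt D \<theta> = hcmp D P Q" "lft D \<theta> = vid D A" using assms(4-6) simps(15,4) by simp_all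
  have thA: "hdom D (src D \<theta>) = A" using th lft_dom[of \<theta>] simps by simp
  note th = th thA
  have E: "E \<in> Cel D" "src D E = hcmp D P Q" "tgt D E = Q" "lft D E = h" "rgt D E = vid D (hcod D Q)"
    using simps E_def by auto
  have z: "cv D (ru D P) (ch D q p) = lu D P" using zigzag[OF assms(1)] q_def P_def by simp
  have i1: "ch D q (cv D E \<theta>) = cv D (ch D q E) (ch D (cid D U) \<theta>)"
    using interchange[of "cid D U" q \<theta> E] simps th E by simp
  have i2: "ch D q E = cv D (ch D (cid D P) (lu D Q)) (ch D q (ch D p (cid D Q)))"
    using interchange[of q "cid D P" "ch D p (cid D Q)" "lu D Q"] simps E_def by simp
  have an: "cv D (asc D P (hun D C) Q) (ch D (ch D q p) (cid D Q)) = cv D (ch D q (ch D p (cid D Q))) (asc D U P Q)"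
    using asc_nat[of q p "cid D Q"] simps by simp
  have tr: "cv D (ch D (cid D P) (lu D Q)) (asc D P (hun D C) Q) = ch D (ru D P) (cid D Q)"
    using triangle[of P Q] simps by simp
  have i3: "cv D (ch D (ru D P) (cid D Q)) (ch D (ch D q p) (cid D Q)) = ch D (lu D P) (cid D Q)"
    using interchange[of "ch D q p" "ru D P" "cid D Q" "cid D Q"] simps z by simp
  have k: "cv D (lu D (hcmp D P Q)) (asc D U P Q) = ch D (lu D P) (cid D Q)"
    using K1[of P Q] simps by simp
  have "cv D (ch D q E) (asc D U P Q) = cv D (ch D (cid D P) (lu D Q)) (cv D (ch D q (ch D p (cid D Q))) (asc D U P Q))"
    unfolding i2 using simps by (intro cv_assoc) simp_all
  also have "\<dots> = cv D (ch D (cid D P) (lu D Q)) (cv D (asc D P (hun D C) Q) (ch D (ch D q p) (cid D Q)))"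
    unfolding an ..
  also have "\<dots> = cv D (ch D (ru D P) (cid D Q)) (ch D (ch D q p) (cid D Q))"
    unfolding tr[symmetric] using simps by (intro cv_assoc[symmetric]) simp_all
  finally have "cv D (ch D q E) (asc D U P Q) = cv D (lu D (hcmp D P Q)) (asc D U P Q)" using i3 k by simp
  hence qE: "ch D q E = lu D (hcmp D P Q)"
    using iso_epi[of "asc D U P Q" "ch D q E" "lu D (hcmp D P Q)"] simps E i2 by simp
  have "ch D q (cv D E \<theta>) = cv D (lu D (hcmp D P Q)) (ch D (cid D U) \<theta>)" using i1 qE by simp
  also have "\<dots> = cv D \<theta> (lu D (src D \<theta>))" using lu_nat[of \<theta>] th simps by simp
  finally show ?thesis unfolding E_def q_def .
qed

end


locale DCT = DC D for D :: "('o,'v,'h,'c) dblcat" +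
  fixes T :: "('o,'v,'h,'c) ldf" and \<iota> :: "('v,'c,'o,'h) dtr"
  assumes nf: "normal_lax_double_functor D T" and tr: "double_transformation D (id_ldf D) T \<iota>"
begin
lemmas nfx = nf[unfolded normal_lax_double_functor_def vseq_def hseq_def cvseq_def chseq_def]
lemmas trx = tr[unfolded double_transformation_def vseq_def hseq_def cvseq_def chseq_def id_ldf_def, simplified]
lemmas t1 = nfx[THEN conjunct1]
lemmas t2 = nfx[THEN conjunct2, THEN conjunct1]
lemmas t3 = nfx[THEN conjunct2, THEN conjunct2, THEN conjunct1]
lemmas t4 = nfx[THEN conjunct2, THEN conjunct2, THEN conjunct2, THEN conjunct1]
lemmas t5 = nfx[THEN conjunct2, THEN conjunct2, THEN conjunct2, THEN conjunct2, THEN conjunct1]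
lemmas t6 = nfx[THEN conjunct2, THEN conjunct2, THEN conjunct2, THEN conjunct2, THEN conjunct2, THEN conjunct1]
lemmas t7 = nfx[THEN conjunct2, THEN conjunct2, THEN conjunct2, THEN conjunct2, THEN conjunct2, THEN conjunct2, THEN conjunct1]
lemmas t8 = nfx[THEN conjunct2, THEN conjunct2, THEN conjunct2, THEN conjunct2, THEN conjunct2, THEN conjunct2, THEN conjunct2, THEN conjunct1]
lemmas t9 = nfx[THEN conjunct2, THEN conjunct2, THEN conjunct2, THEN conjunct2, THEN conjunct2, THEN conjunct2, THEN conjunct2, THEN conjunct2, THEN conjunct1]
lemmas t10 = nfx[THEN conjunct2, THEN conjunct2, THEN conjunct2, THEN conjunct2, THEN conjunct2, THEN conjunct2, THEN conjunct2, THEN conjunct2, THEN conjunct2, THEN conjunct1]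
lemmas t11 = nfx[THEN conjunct2, THEN conjunct2, THEN conjunct2, THEN conjunct2, THEN conjunct2, THEN conjunct2, THEN conjunct2, THEN conjunct2, THEN conjunct2, THEN conjunct2, THEN conjunct1]
lemmas t12 = nfx[THEN conjunct2, THEN conjunct2, THEN conjunct2, THEN conjunct2, THEN conjunct2, THEN conjunct2, THEN conjunct2, THEN conjunct2, THEN conjunct2, THEN conjunct2, THEN conjunct2, THEN conjunct1]
lemmas t13 = nfx[THEN conjunct2, THEN conjunct2, THEN conjunct2, THEN conjunct2, THEN conjunct2, THEN conjunct2, THEN conjunct2, THEN conjunct2, THEN conjunct2, THEN conjunct2, THEN conjunct2, THEN conjunct2, THEN conjunct1]
lemmas t14 = nfx[THEN conjunct2, THEN conjunct2, THEN conjunct2, THEN conjunct2, THEN conjunct2, THEN conjunct2, THEN conjunct2, THEN conjunct2, THEN conjunct2, THEN conjunct2, THEN conjunct2, THEN conjunct2, THEN conjunct2, THEN conjunct1]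
lemmas t15 = nfx[THEN conjunct2, THEN conjunct2, THEN conjunct2, THEN conjunct2, THEN conjunct2, THEN conjunct2, THEN conjunct2, THEN conjunct2, THEN conjunct2, THEN conjunct2, THEN conjunct2, THEN conjunct2, THEN conjunct2, THEN conjunct2]
lemmas i1 = trx[THEN conjunct1]
lemmas i2 = trx[THEN conjunct2, THEN conjunct1]
lemmas i3 = trx[THEN conjunct2, THEN conjunct2, THEN conjunct1]
lemmas i4 = trx[THEN conjunct2, THEN conjunct2, THEN conjunct2, THEN conjunct1]
lemmas i5 = trx[THEN conjunct2, THEN conjunct2, THEN conjunct2, THEN conjunct2, THEN conjunct1]
lemmas i6 = trx[THEN conjunct2, THEN conjunct2, THEN conjunct2, THEN conjunct2, THEN conjunct2]

lemma fo_Ob[simp]: "A \<in> Ob D \<Longrightarrow> fo T A \<in> Ob D" using t1 by blast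
lemma fv_Ver[simp]: "f \<in> Ver D \<Longrightarrow> fv T f \<in> Ver D" using t2 by blast
lemma fv_dom[simp]: "f \<in> Ver D \<Longrightarrow> vdom D (fv T f) = fo T (vdom D f)" using t2 by blast
lemma fv_cod[simp]: "f \<in> Ver D \<Longrightarrow> vcod D (fv T f) = fo T (vcod D f)" using t2 by blast
lemma fh_Hor[simp]: "J \<in> Hor D \<Longrightarrow> fh T J \<in> Hor D" using t3 by blast
lemma fh_dom[simp]: "J \<in> Hor D \<Longrightarrow> hdom D (fh T J) = fo T (hdom D J)" using t3 by blast
lemma fh_cod[simp]: "J \<in> Hor D \<Longrightarrow> hcod D (fh T J) = fo T (hcod D J)" using t3 by blast
lemma fc_Cel[simp]: "\<phi> \<in> Cel D \<Longrightarrow> fc T \<phi> \<in> Cel D" using t4 by blast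
lemma fc_src[simp]: "\<phi> \<in> Cel D \<Longrightarrow> src D (fc T \<phi>) = fh T (src D \<phi>)" using t4 by blast
lemma fc_tgt[simp]: "\<phi> \<in> Cel D \<Longrightarrow> tgt D (fc T \<phi>) = fh T (tgt D \<phi>)" using t4 by blast
lemma fc_lft[simp]: "\<phi> \<in> Cel D \<Longrightarrow> lft D (fc T \<phi>) = fv T (lft D \<phi>)" using t4 by blast
lemma fc_rgt[simp]: "\<phi> \<in> Cel D \<Longrightarrow> rgt D (fc T \<phi>) = fv T (rgt D \<phi>)" using t4 by blast
lemma fv_vid[simp]: "A \<in> Ob D \<Longrightarrow> fv T (vid D A) = vid D (fo T A)" using t5 by blast
lemma fv_vcmp: "f \<in> Ver D \<Longrightarrow> g \<in> Ver D \<Longrightarrow> vcod D f = vdom D g \<Longrightarrow> fv T (vcmp D g f) = vcmp D (fv T g) (fv T f)" using t6 by blast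
lemma fc_cv: "\<phi> \<in> Cel D \<Longrightarrow> \<psi> \<in> Cel D \<Longrightarrow> tgt D \<phi> = src D \<psi> \<Longrightarrow> fc T (cv D \<psi> \<phi>) = cv D (fc T \<psi>) (fc T \<phi>)" using t8 by blast
lemma fh_hun[simp]: "A \<in> Ob D \<Longrightarrow> fh T (hun D A) = hun D (fo T A)" using t9 by blast
lemma fc_cun[simp]: "f \<in> Ver D \<Longrightarrow> fc T (cun D f) = cun D (fv T f)" using t10 by blast
lemma fcmp_glob: "J \<in> Hor D \<Longrightarrow> H \<in> Hor D \<Longrightarrow> hcod D J = hdom D H \<Longrightarrow> globular D (fcmp T J H) (hcmp D (fh T J) (fh T H)) (fh T (hcmp D J H))"
  using t11 by blast
lemma fcmp_Cel[simp]: "J \<in> Hor D \<Longrightarrow> H \<in> Hor D \<Longrightarrow> hcod D J = hdom D H \<Longrightarrow> fcmp T J H \<in> Cel D" using fcmp_glob unfolding globular_def by blast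
lemma fcmp_src[simp]: "J \<in> Hor D \<Longrightarrow> H \<in> Hor D \<Longrightarrow> hcod D J = hdom D H \<Longrightarrow> src D (fcmp T J H) = hcmp D (fh T J) (fh T H)" using fcmp_glob unfolding globular_def by blast
lemma fcmp_tgt[simp]: "J \<in> Hor D \<Longrightarrow> H \<in> Hor D \<Longrightarrow> hcod D J = hdom D H \<Longrightarrow> tgt D (fcmp T J H) = fh T (hcmp D J H)" using fcmp_glob unfolding globular_def by blast
lemma fcmp_lft[simp]: "J \<in> Hor D \<Longrightarrow> H \<in> Hor D \<Longrightarrow> hcod D J = hdom D H \<Longrightarrow> lft D (fcmp T J H) = vid D (fo T (hdom D J))" using fcmp_glob unfolding globular_def by simp
lemma fcmp_rgt[simp]: "J \<in> Hor D \<Longrightarrow> H \<in> Hor D \<Longrightarrow> hcod D J = hdom D H \<Longrightarrow> rgt D (fcmp T J H) = vid D (fo T (hcod D H))" using fcmp_glob unfolding globular_def by simp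
lemma fcmp_nat: "\<phi> \<in> Cel D \<Longrightarrow> \<psi> \<in> Cel D \<Longrightarrow> hcod D (src D \<phi>) = hdom D (src D \<psi>) \<Longrightarrow> rgt D \<phi> = lft D \<psi> \<Longrightarrow>
        cv D (fc T (ch D \<phi> \<psi>)) (fcmp T (src D \<phi>) (src D \<psi>))
        = cv D (fcmp T (tgt D \<phi>) (tgt D \<psi>)) (ch D (fc T \<phi>) (fc T \<psi>))" using t12 by blast
lemma fcmp_lu: "J \<in> Hor D \<Longrightarrow> cv D (fc T (lu D J)) (fcmp T (hun D (hdom D J)) J) = lu D (fh T J)" using t14 by blast
lemma fcmp_ru: "J \<in> Hor D \<Longrightarrow> cv D (fc T (ru D J)) (fcmp T J (hun D (hcod D J))) = ru D (fh T J)" using t15 by blast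

lemma to_Ver[simp]: "A \<in> Ob D \<Longrightarrow> to \<iota> A \<in> Ver D" using i1 by blast
lemma to_dom[simp]: "A \<in> Ob D \<Longrightarrow> vdom D (to \<iota> A) = A" using i1 by blast
lemma to_cod[simp]: "A \<in> Ob D \<Longrightarrow> vcod D (to \<iota> A) = fo T A" using i1 by blast
lemma th_Cel[simp]: "J \<in> Hor D \<Longrightarrow> th \<iota> J \<in> Cel D" using i2 by blast
lemma th_src[simp]: "J \<in> Hor D \<Longrightarrow> src D (th \<iota> J) = J" using i2 by blast
lemma th_tgt[simp]: "J \<in> Hor D \<Longrightarrow> tgt D (th \<iota> J) = fh T J" using i2 by blast
lemma th_lft[simp]: "J \<in> Hor D \<Longrightarrow> lft D (th \<iota> J) = to \<iota> (hdom D J)" using i2 by blast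
lemma th_rgt[simp]: "J \<in> Hor D \<Longrightarrow> rgt D (th \<iota> J) = to \<iota> (hcod D J)" using i2 by blast
lemma to_nat: "f \<in> Ver D \<Longrightarrow> vcmp D (to \<iota> (vcod D f)) f = vcmp D (fv T f) (to \<iota> (vdom D f))" using i3 by blast
lemma th_nat: "\<phi> \<in> Cel D \<Longrightarrow> cv D (th \<iota> (tgt D \<phi>)) \<phi> = cv D (fc T \<phi>) (th \<iota> (src D \<phi>))" using i4 by blast
lemma th_hun[simp]: "A \<in> Ob D \<Longrightarrow> th \<iota> (hun D A) = cun D (to \<iota> A)" using i6 by blast

end

context DCT begin

lemma Tzig: assumes cp: "companion_cell D f p"
  shows "cv D (ru D (fh T (src D p))) (ch D (fc T (companion_unit D f p)) (fc T p)) = lu D (fh T (src D p))"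
proof -
  note b = comp_basic[OF cp]
  define q where "q = companion_unit D f p"
  note u = comp_unit[OF cp, folded q_def]
  define J where "J = src D p"
  define A where "A = vdom D f"
  define C where "C = vcod D f"
  have simps: "f \<in> Ver D" "p \<in> Cel D" "J \<in> Hor D" "hdom D J = A" "hcod D J = C" "tgt D p = hun D C" "lft D p = f"
    "rgt D p = vid D C" "q \<in> Cel D" "src D q = hun D A" "tgt D q = J" "lft D q = vid D A" "rgt D q = f" "cv D p q = cun D f"
    "src D p = J" "vdom D f = A" "vcod D f = C" "A \<in> Ob D" "C \<in> Ob D"
    using b u J_def A_def C_def by auto
  have z: "cv D (ru D J) (ch D q p) = lu D J" using zigzag[OF cp] q_def J_def by simp
  have "cv D (ru D (fh T J)) (ch D (fc T q) (fc T p)) = cv D (cv D (fc T (ru D J)) (fcmp T J (hun D C))) (ch D (fc T q) (fc T p))"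
    using fcmp_ru[of J] simps by simp
  also have "\<dots> = cv D (fc T (ru D J)) (cv D (fcmp T J (hun D C)) (ch D (fc T q) (fc T p)))"
    using simps by (intro cv_assoc) simp_all
  also have "\<dots> = cv D (fc T (ru D J)) (cv D (fc T (ch D q p)) (fcmp T (hun D A) J))"
    using fcmp_nat[of q p] simps by simp
  also have "\<dots> = cv D (cv D (fc T (ru D J)) (fc T (ch D q p))) (fcmp T (hun D A) J)"
    using simps by (intro cv_assoc[symmetric]) simp_all
  also have "\<dots> = cv D (fc T (lu D J)) (fcmp T (hun D A) J)"
    using fc_cv[of "ch D q p" "ru D J"] simps z by simp
  also have "\<dots> = lu D (fh T J)" using fcmp_lu[of J] simps by simp
  finally show ?thesis unfolding J_def q_def .
qed

lemma TJinj: assumes cp: "companion_cell D f p" and th: "\<theta> \<in> Cel D" "tgt D \<theta> = fh T (src D p)" "rgt D \<theta> = vid D (fo T (vcod D f))"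
  shows "cv D (ru D (fh T (src D p))) (ch D (cv D (fc T (companion_unit D f p)) (cun D (lft D \<theta>))) (cv D (fc T p) \<theta>)) = cv D \<theta> (lu D (src D \<theta>))"
proof -
  note b = comp_basic[OF cp]
  define q where "q = companion_unit D f p"
  note u = comp_unit[OF cp, folded q_def]
  define J where "J = src D p"
  define A where "A = vdom D f"
  define C where "C = vcod D f"
  define h where "h = lft D \<theta>"
  have simps: "f \<in> Ver D" "p \<in> Cel D" "J \<in> Hor D" "hdom D J = A" "hcod D J = C" "tgt D p = hun D C" "lft D p = f"
    "rgt D p = vid D C" "q \<in> Cel D" "src D q = hun D A" "tgt D q = J" "lft D q = vid D A" "rgt D q = f" "cv D p q = cun D f"
    "src D p = J" "vdom D f = A" "vcod D f = C" "A \<in> Ob D" "C \<in> Ob D"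
    using b u J_def A_def C_def by auto
  have th2: "\<theta> \<in> Cel D" "tgt D \<theta> = fh T J" "rgt D \<theta> = vid D (fo T C)" "lft D \<theta> = h" "h \<in> Ver D"
     "vcod D h = fo T A" "vdom D h = hdom D (src D \<theta>)"
    using th simps(3,4,15,17) h_def lft_cod[of \<theta>] lft_dom[of \<theta>] by simp_all
  have z: "cv D (ru D (fh T J)) (ch D (fc T q) (fc T p)) = lu D (fh T J)" using Tzig[OF cp] q_def J_def by simp
  have i: "ch D (cv D (fc T q) (cun D h)) (cv D (fc T p) \<theta>) = cv D (ch D (fc T q) (fc T p)) (ch D (cun D h) \<theta>)"
    using interchange[of "cun D h" "fc T q" \<theta> "fc T p"] simps th2 by simp
  have "cv D (ru D (fh T J)) (ch D (cv D (fc T q) (cun D h)) (cv D (fc T p) \<theta>))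
      = cv D (cv D (ru D (fh T J)) (ch D (fc T q) (fc T p))) (ch D (cun D h) \<theta>)"
    unfolding i using simps th2 by (intro cv_assoc[symmetric]) simp_all
  also have "\<dots> = cv D \<theta> (lu D (src D \<theta>))" unfolding z using lu_nat[of \<theta>] th2 by simp
  finally show ?thesis unfolding J_def q_def h_def .
qed

lemma mainBC: assumes cp: "companion_cell D f p"
  and cA: "companion_cell D (to \<iota> (hdom D (src D p))) pA"
  and cC: "companion_cell D (to \<iota> (hcod D (src D p))) pC"
  shows "iso_cell D (iota_star D T \<iota> (src D p) pA pC)"
proof -
  note b = comp_basic[OF cp]
  define q where "q = companion_unit D f p"
  note u = comp_unit[OF cp, folded q_def]
  define J where "J = src D p"
  define A where "A = vdom D f"
  define C where "C = vcod D f"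
  have AC: "A \<in> Ob D" "C \<in> Ob D" "hdom D J = A" "hcod D J = C" using b A_def C_def J_def by auto
  define iA where "iA = to \<iota> A"
  define iC where "iC = to \<iota> C"
  have cA': "companion_cell D iA pA" using cA AC iA_def J_def by simp
  have cC': "companion_cell D iC pC" using cC AC iC_def J_def by simp
  note bA = comp_basic[OF cA'] and bC = comp_basic[OF cC']
  define qA where "qA = companion_unit D iA pA"
  define qC where "qC = companion_unit D iC pC"
  note uA = comp_unit[OF cA', folded qA_def] and uC = comp_unit[OF cC', folded qC_def]
  define P1 where "P1 = src D pA"
  define Q1 where "Q1 = src D pC"
  define TA where "TA = fo T A"
  define TC where "TC = fo T C"
  define TJ where "TJ = fh T J"
  define Tf where "Tf = fv T f"
  define Tp where "Tp = fc T p"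
  define g where "g = vcmp D iC f"
  define U1 where "U1 = hun D TC"
  define UA where "UA = hun D A"
  define Kh where "Kh = hcmp D P1 TJ"
  define Hh where "Hh = hcmp D J Q1"
  have simps: "f \<in> Ver D" "p \<in> Cel D" "J \<in> Hor D" "hdom D J = A" "hcod D J = C" "tgt D p = hun D C" "lft D p = f"
    "rgt D p = vid D C" "q \<in> Cel D" "src D q = UA" "tgt D q = J" "lft D q = vid D A" "rgt D q = f" "cv D p q = cun D f"
    "src D p = J" "vdom D f = A" "vcod D f = C" "A \<in> Ob D" "C \<in> Ob D"
    "iA \<in> Ver D" "vdom D iA = A" "vcod D iA = TA" "iC \<in> Ver D" "vdom D iC = C" "vcod D iC = TC"
    "pA \<in> Cel D" "P1 \<in> Hor D" "hdom D P1 = A" "hcod D P1 = TA" "tgt D pA = hun D TA" "lft D pA = iA" "rgt D pA = vid D TA"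
    "qA \<in> Cel D" "src D qA = UA" "tgt D qA = P1" "lft D qA = vid D A" "rgt D qA = iA" "cv D pA qA = cun D iA" "src D pA = P1"
    "pC \<in> Cel D" "Q1 \<in> Hor D" "hdom D Q1 = C" "hcod D Q1 = TC" "tgt D pC = U1" "lft D pC = iC" "rgt D pC = vid D TC"
    "qC \<in> Cel D" "src D qC = hun D C" "tgt D qC = Q1" "lft D qC = vid D C" "rgt D qC = iC" "cv D pC qC = cun D iC" "src D pC = Q1"
    "TA \<in> Ob D" "TC \<in> Ob D" "TJ \<in> Hor D" "hdom D TJ = TA" "hcod D TJ = TC"
    "Tf \<in> Ver D" "vdom D Tf = TA" "vcod D Tf = TC" "Tp \<in> Cel D" "src D Tp = TJ" "tgt D Tp = U1" "lft D Tp = Tf" "rgt D Tp = vid D TC"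
    "fo T A = TA" "fo T C = TC" "fh T J = TJ" "fv T f = Tf" "fc T p = Tp" "to \<iota> A = iA" "to \<iota> C = iC"
    "hun D TC = U1" "hun D A = UA" "U1 \<in> Hor D" "hdom D U1 = TC" "hcod D U1 = TC" "UA \<in> Hor D" "hdom D UA = A" "hcod D UA = A"
    "th \<iota> (hun D C) = cun D iC"
    using b u bA uA bC uC AC
    by (auto simp: J_def A_def C_def iA_def iC_def P1_def Q1_def TA_def TC_def TJ_def Tf_def Tp_def U1_def UA_def)
  have gdef: "vcmp D iC f = g" "g \<in> Ver D" "vdom D g = A" "vcod D g = TC" using g_def simps by auto
  have gT: "vcmp D Tf iA = g" using to_nat[of f] simps g_def by simp
  have Kh: "Kh \<in> Hor D" "hdom D Kh = A" "hcod D Kh = TC" "hcmp D P1 TJ = Kh" using Kh_def simps by auto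
  have Hh: "Hh \<in> Hor D" "hdom D Hh = A" "hcod D Hh = TC" "hcmp D J Q1 = Hh" using Hh_def simps by auto
  note S = simps gdef gT Kh Hh
  define X where "X = iota_star D T \<iota> J pA pC"
  have Xd: "X = cv D (ru D Kh) (cv D (ch D (ch D qA (th \<iota> J)) pC) (ch D (cinv D (lu D J)) (cid D Q1)))"
  proof -
    have e: "src D pA = P1" "fh T J = TJ" "hcmp D P1 TJ = Kh" "hdom D J = A" "to \<iota> A = iA"
       "companion_unit D iA pA = qA" "src D pC = Q1" using S qA_def by simp_all
    show ?thesis unfolding X_def iota_star_def by (simp only: e)
  qed
  define \<psi> where "\<psi> = cv D (cun D iC) p"
  define \<phi>K where "\<phi>K = cv D (cun D Tf) pA"
  define d where "d = cv D (lu D U1) (ch D \<psi> pC)"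
  define c where "c = cv D (lu D U1) (ch D \<phi>K Tp)"
  have psi: "\<psi> \<in> Cel D" "src D \<psi> = J" "tgt D \<psi> = U1" "lft D \<psi> = g" "rgt D \<psi> = iC" using \<psi>_def S by auto
  have phiK: "\<phi>K \<in> Cel D" "src D \<phi>K = P1" "tgt D \<phi>K = U1" "lft D \<phi>K = g" "rgt D \<phi>K = Tf" using \<phi>K_def S by auto
  note S = S psi phiK
  have dc: "d \<in> Cel D" "src D d = Hh" "tgt D d = U1" "lft D d = g" "rgt D d = vid D TC"
     "c \<in> Cel D" "src D c = Kh" "tgt D c = U1" "lft D c = g" "rgt D c = vid D TC"
    using d_def c_def S by auto
  have X: "X \<in> Cel D" "src D X = Hh" "tgt D X = Kh" "lft D X = vid D A" "rgt D X = vid D TC"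
    unfolding Xd using S by auto
  note S = S dc X
  have LR1: "ru D U1 = lu D U1" using LR[of TC] S by simp
  have f1a: "cv D c (ru D Kh) = cv D (ru D U1) (ch D c (cid D U1))" using ru_nat[of c] S by simp
  have f1b: "cv D (ch D c (cid D U1)) (ch D (ch D qA (th \<iota> J)) pC) = ch D (cv D c (ch D qA (th \<iota> J))) pC"
    using interchange[of "ch D qA (th \<iota> J)" c pC "cid D U1"] S by simp
  have f1c1: "cv D \<phi>K qA = cun D g"
  proof -
    have "cv D \<phi>K qA = cv D (cun D Tf) (cv D pA qA)" unfolding \<phi>K_def using S by (intro cv_assoc) simp_all
    also have "\<dots> = cun D g" using S cun_vcmp[of iA Tf] by simp
    finally show ?thesis .
  qed
  have f1c2: "cv D Tp (th \<iota> J) = \<psi>" using th_nat[of p] S \<psi>_def by simp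
  have f1c: "cv D c (ch D qA (th \<iota> J)) = cv D (lu D U1) (ch D (cun D g) \<psi>)"
  proof -
    have "cv D c (ch D qA (th \<iota> J)) = cv D (lu D U1) (cv D (ch D \<phi>K Tp) (ch D qA (th \<iota> J)))"
      unfolding c_def using S by (intro cv_assoc) simp_all
    also have "\<dots> = cv D (lu D U1) (ch D (cv D \<phi>K qA) (cv D Tp (th \<iota> J)))"
      using interchange[of qA \<phi>K "th \<iota> J" Tp] S by simp
    finally show ?thesis unfolding f1c1 f1c2 .
  qed
  have f1d: "cv D (lu D U1) (ch D (cun D g) \<psi>) = cv D \<psi> (lu D J)" using lu_nat[of \<psi>] S by simp
  have f1e: "cv D (ch D (cv D \<psi> (lu D J)) pC) (ch D (cinv D (lu D J)) (cid D Q1)) = ch D \<psi> pC"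
  proof -
    have "cv D (ch D (cv D \<psi> (lu D J)) pC) (ch D (cinv D (lu D J)) (cid D Q1))
        = ch D (cv D (cv D \<psi> (lu D J)) (cinv D (lu D J))) (cv D pC (cid D Q1))"
      using interchange[of "cinv D (lu D J)" "cv D \<psi> (lu D J)" "cid D Q1" pC] S by simp
    also have "cv D (cv D \<psi> (lu D J)) (cinv D (lu D J)) = \<psi>"
      using S by (subst cv_assoc) simp_all
    finally show ?thesis using S by simp
  qed
  have F1: "cv D c X = d"
  proof -
    let ?M = "ch D (ch D qA (th \<iota> J)) pC" and ?N = "ch D (cinv D (lu D J)) (cid D Q1)"
    have "cv D c X = cv D (cv D c (ru D Kh)) (cv D ?M ?N)" unfolding Xd using S by (intro cv_assoc[symmetric]) simp_all
    also have "\<dots> = cv D (ru D U1) (cv D (ch D c (cid D U1)) (cv D ?M ?N))" unfolding f1a using S by (intro cv_assoc) simp_all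
    also have "\<dots> = cv D (ru D U1) (cv D (cv D (ch D c (cid D U1)) ?M) ?N)" using S by (subst cv_assoc) simp_all
    also have "\<dots> = cv D (ru D U1) (ch D \<psi> pC)" unfolding f1b f1c f1d f1e ..
    finally show ?thesis unfolding LR1 d_def .
  qed
  define uH where "uH = cv D (ch D q (cv D qC (cun D f))) (cinv D (lu D UA))"
  have uH: "uH \<in> Cel D" "src D uH = UA" "tgt D uH = Hh" "lft D uH = vid D A" "rgt D uH = g"
    unfolding uH_def using S by auto
  define Y where "Y = cv D (ru D Hh) (cv D (ch D uH c) (cinv D (lu D Kh)))"
  have Y: "Y \<in> Cel D" "src D Y = Kh" "tgt D Y = Hh" "lft D Y = vid D A" "rgt D Y = vid D TC"
    unfolding Y_def using S uH by auto
  have f2c: "cv D d uH = cun D g"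
  proof -
    have e1: "cv D \<psi> q = cun D g" unfolding \<psi>_def using S cun_vcmp[of f iC]
      by (subst cv_assoc) simp_all
    have e2: "cv D pC (cv D qC (cun D f)) = cun D g" using S cun_vcmp[of f iC]
      by (subst cv_assoc[symmetric]) simp_all
    have "cv D d uH = cv D (lu D U1) (cv D (ch D \<psi> pC) uH)" unfolding d_def using S uH by (intro cv_assoc) simp_all
    also have "\<dots> = cv D (lu D U1) (cv D (cv D (ch D \<psi> pC) (ch D q (cv D qC (cun D f)))) (cinv D (lu D UA)))"
      unfolding uH_def using S by (subst cv_assoc) simp_all
    also have "\<dots> = cv D (lu D U1) (cv D (ch D (cun D g) (cun D g)) (cinv D (lu D UA)))"
      using interchange[of q \<psi> "cv D qC (cun D f)" pC] S e1 e2 by simp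
    also have "\<dots> = cv D (cv D (lu D U1) (ch D (cun D g) (cun D g))) (cinv D (lu D UA))"
      using S by (intro cv_assoc[symmetric]) simp_all
    also have "\<dots> = cv D (cv D (cun D g) (lu D UA)) (cinv D (lu D UA))"
      using lu_nat[of "cun D g"] S by simp
    also have "\<dots> = cun D g" using S by (subst cv_assoc) simp_all
    finally show ?thesis .
  qed
  have F2: "cv D d Y = c"
  proof -
    have "cv D d Y = cv D (cv D d (ru D Hh)) (cv D (ch D uH c) (cinv D (lu D Kh)))"
      unfolding Y_def using S uH by (intro cv_assoc[symmetric]) simp_all
    also have "\<dots> = cv D (cv D (ru D U1) (ch D d (cid D U1))) (cv D (ch D uH c) (cinv D (lu D Kh)))"
      using ru_nat[of d] S by simp
    also have "\<dots> = cv D (ru D U1) (cv D (cv D (ch D d (cid D U1)) (ch D uH c)) (cinv D (lu D Kh)))"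
      using S uH by (simp add: cv_assoc)
    also have "\<dots> = cv D (ru D U1) (cv D (ch D (cun D g) c) (cinv D (lu D Kh)))"
      using interchange[of uH d c "cid D U1"] S uH f2c by simp
    also have "\<dots> = cv D (cv D (lu D U1) (ch D (cun D g) c)) (cinv D (lu D Kh))"
      unfolding LR1 using S by (intro cv_assoc[symmetric]) simp_all
    also have "\<dots> = cv D (cv D c (lu D Kh)) (cinv D (lu D Kh))"
      using lu_nat[of c] S by simp
    also have "\<dots> = c" using S by (subst cv_assoc) simp_all
    finally show ?thesis .
  qed
  define EH where "EH = cv D (lu D Q1) (ch D p (cid D Q1))"
  define EK where "EK = cv D (lu D TJ) (ch D pA (cid D TJ))"
  have E: "EH \<in> Cel D" "src D EH = Hh" "tgt D EH = Q1" "lft D EH = f" "rgt D EH = vid D TC"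
      "EK \<in> Cel D" "src D EK = Kh" "tgt D EK = TJ" "lft D EK = iA" "rgt D EK = vid D TC"
    unfolding EH_def EK_def using S by auto
  have dE: "d = cv D pC EH"
  proof -
    have "cv D pC EH = cv D (cv D pC (lu D Q1)) (ch D p (cid D Q1))" unfolding EH_def using S by (intro cv_assoc[symmetric]) simp_all
    also have "\<dots> = cv D (cv D (lu D U1) (ch D (cun D iC) pC)) (ch D p (cid D Q1))" using lu_nat[of pC] S by simp
    also have "\<dots> = cv D (lu D U1) (cv D (ch D (cun D iC) pC) (ch D p (cid D Q1)))" using S by (intro cv_assoc) simp_all
    also have "\<dots> = d" unfolding d_def \<psi>_def using interchange[of p "cun D iC" "cid D Q1" pC] S by simp
    finally show ?thesis by simp
  qed
  have cE: "c = cv D Tp EK"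
  proof -
    have "cv D Tp EK = cv D (cv D Tp (lu D TJ)) (ch D pA (cid D TJ))" unfolding EK_def using S by (intro cv_assoc[symmetric]) simp_all
    also have "\<dots> = cv D (cv D (lu D U1) (ch D (cun D Tf) Tp)) (ch D pA (cid D TJ))" using lu_nat[of Tp] S by simp
    also have "\<dots> = cv D (lu D U1) (cv D (ch D (cun D Tf) Tp) (ch D pA (cid D TJ)))" using S by (intro cv_assoc) simp_all
    also have "\<dots> = c" unfolding c_def \<phi>K_def using interchange[of pA "cun D Tf" "cid D TJ" Tp] S by simp
    finally show ?thesis by simp
  qed
  have injH: "\<theta> = \<theta>'" if th: "\<theta> \<in> Cel D" "\<theta>' \<in> Cel D" "src D \<theta> = src D \<theta>'" "tgt D \<theta> = Hh" "tgt D \<theta>' = Hh"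
    "lft D \<theta> = vid D A" "lft D \<theta>' = vid D A" "rgt D \<theta> = rgt D \<theta>'" "cv D d \<theta> = cv D d \<theta>'" for \<theta> \<theta>'
  proof -
    have "cv D pC (cv D EH \<theta>) = cv D pC (cv D EH \<theta>')"
      using th(9) unfolding dE using S E th by (simp add: cv_assoc)
    hence e: "cv D EH \<theta> = cv D EH \<theta>'"
      using cart_unique[OF bC(3), of "cv D EH \<theta>" "cv D EH \<theta>'"] S E th by simp
    have "cv D \<theta> (lu D (src D \<theta>)) = cv D \<theta>' (lu D (src D \<theta>'))"
      using inj_comp[OF cp, of Q1 \<theta>] inj_comp[OF cp, of Q1 \<theta>'] S th e unfolding EH_def q_def by simp
    hence eq: "cv D \<theta> (lu D (src D \<theta>)) = cv D \<theta>' (lu D (src D \<theta>))" using th(3) by simp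
    have i: "iso_cell D (lu D (src D \<theta>))" using th(1) by simp
    have t1: "src D \<theta> = tgt D (lu D (src D \<theta>))" using th(1) by simp
    have t2: "src D \<theta>' = tgt D (lu D (src D \<theta>))" using th(1,2,3) by simp
    show ?thesis by (rule iso_epi[OF i th(1) th(2) t1 t2 eq])
  qed
  have injK: "\<theta> = \<theta>'" if th: "\<theta> \<in> Cel D" "\<theta>' \<in> Cel D" "src D \<theta> = src D \<theta>'" "tgt D \<theta> = Kh" "tgt D \<theta>' = Kh"
    "lft D \<theta> = vid D A" "lft D \<theta>' = vid D A" "rgt D \<theta> = vid D TC" "rgt D \<theta>' = vid D TC" "cv D c \<theta> = cv D c \<theta>'" for \<theta> \<theta>'
  proof -
    have e0: "cv D Tp (cv D EK \<theta>) = cv D Tp (cv D EK \<theta>')"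
      using th(10) unfolding cE using S E th by (simp add: cv_assoc)
    have "cv D (cv D EK \<theta>) (lu D (src D \<theta>)) = cv D (cv D EK \<theta>') (lu D (src D \<theta>'))"
      using TJinj[OF cp, of "cv D EK \<theta>"] TJinj[OF cp, of "cv D EK \<theta>'"] S E th e0 by simp
    hence e: "cv D EK \<theta> = cv D EK \<theta>'" using iso_epi[of "lu D (src D \<theta>)" "cv D EK \<theta>" "cv D EK \<theta>'"] th S E by simp
    have "cv D \<theta> (lu D (src D \<theta>)) = cv D \<theta>' (lu D (src D \<theta>'))"
      using inj_comp[OF cA', of TJ \<theta>] inj_comp[OF cA', of TJ \<theta>'] S th e unfolding EK_def qA_def by simp
    hence eq: "cv D \<theta> (lu D (src D \<theta>)) = cv D \<theta>' (lu D (src D \<theta>))" using th(3) by simp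
    have i: "iso_cell D (lu D (src D \<theta>))" using th(1) by simp
    have t1: "src D \<theta> = tgt D (lu D (src D \<theta>))" using th(1) by simp
    have t2: "src D \<theta>' = tgt D (lu D (src D \<theta>))" using th(1,2,3) by simp
    show ?thesis by (rule iso_epi[OF i th(1) th(2) t1 t2 eq])
  qed
  have YX: "cv D Y X = cid D Hh"
  proof (rule injH)
    have "cv D d (cv D Y X) = cv D (cv D d Y) X" using S Y by (simp add: cv_assoc)
    thus "cv D d (cv D Y X) = cv D d (cid D Hh)" using F1 F2 S by simp
  qed (use S Y in auto)
  have XY: "cv D X Y = cid D Kh"
  proof (rule injK)
    have "cv D c (cv D X Y) = cv D (cv D c X) Y" using S Y by (simp add: cv_assoc)
    thus "cv D c (cv D X Y) = cv D c (cid D Kh)" using F1 F2 S by simp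
  qed (use S Y in auto)
  have "iso_cell D X" unfolding iso_cell_def
    by (intro conjI bexI[of _ Y]) (use S Y YX XY in auto)
  thus ?thesis unfolding X_def J_def .
qed

end

theorem proposition5p6:
  fixes D :: "('o,'v,'h,'c) dblcat"
    and T :: "('o,'v,'h,'c) ldf"
    and \<mu> \<iota> :: "('v,'c,'o,'h) dtr"
  assumes "normal_lax_double_monad D T \<mu> \<iota>"
    and "equipment D"
    and "f \<in> Ver D"
    and "companion_cell D f p"
  shows "right_BC D T \<iota> (src D p)"
proof -
  have m: "double_category D" "normal_lax_double_functor D T" "double_transformation D (id_ldf D) T \<iota>"
    using assms(1) unfolding normal_lax_double_monad_def by auto
  interpret DCT D T \<iota> using m by (unfold_locales) auto
  show ?thesis unfolding right_BC_def using mainBC[OF assms(4)] by blast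
qed
end
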